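(* Let $s_1,\dots,s_{d-1}$ be positive integers, $s_0=s_d=1$, with $s_{i-1}s_i\le n_i$ for all $i$, let $H$ be the stabilizer in $G$ of $T=\sum_{\alpha_1,\dots,\alpha_{d-1}} e_1^{\alpha_1}\otimes e_2^{\iota_2(\alpha_1,\alpha_2)}\otimes\cdots\otimes e_{d-1}^{\iota_{d-1}(\alpha_{d-2},\alpha_{d-1})}\otimes e_d^{\alpha_{d-1}}$, so that $\Pi_{s_1\dots s_{d-1}}=G/H$. Then $G/H$ is reductive if and only if $n_i=s_{i-1}s_i$ for all $i=1,\dots,d$ (i.e. $n_1=s_1$, $n_i=s_{i-1}s_i$ for $2\le i\le d-1$, $n_d=s_{d-1}$). Moreover, in that case the orthogonal complement $\mathfrak{m}$ of $\mathfrak{h}$ in $\mathfrak{g}$ (with respect to $\langle Z,Z'\rangle=\sum_i\mathrm{tr}(Z_iZ_i'^{\mathsf T})$) satisfies $h\mathfrak{m}h^{-1}\subset\mathfrak{m}$ for all $h\in H$.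
   Context: Fix integers $d\ge 3$ and $n_1,\dots,n_d\ge 2$. $V=\mathbb{R}^{n_1}\otimes\cdots\otimes\mathbb{R}^{n_d}$, and $G=\mathrm{GL}(n_1)\times\cdots\times\mathrm{GL}(n_d)$ acts on $V$ by $(g_1,\dots,g_d)\cdot(v_1\otimes\cdots\otimes v_d)=(g_1v_1)\otimes\cdots\otimes(g_dv_d)$, extended linearly. $e_i^1,\dots,e_i^{n_i}$ is the standard basis of $\mathbb{R}^{n_i}$. For $2\le i\le d-1$, $\iota_i:[s_{i-1}]\times[s_i]\to[s_{i-1}s_i]$ is the lexicographic bijection with the first argument most significant. $\mathfrak{g}=\mathfrak{gl}(n_1)\times\cdots\times\mathfrak{gl}(n_d)$ is the Lie algebra of $G$, $\mathfrak{h}$ the Lie algebra of $H$, and $H$ acts on $\mathfrak{g}$ by $hZh^{-1}=(h_iZ_ih_i^{-1})_i$. A homogeneous space $G/H$ is called reductive if there exists a linear subspace $\mathfrak{p}\subset\mathfrak{g}$ with $\mathfrak{p}\oplus\mathfrak{h}=\mathfrak{g}$ and $h\mathfrak{p}h^{-1}\subset\mathfrak{p}$ for all $h\in H$. *)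

theory Defs
  imports Complex_Main
begin

(* Conventions: tensor factors are indexed by i \<in> {1..d}; inside factor i the
   basis vectors are indexed 0-based, a < n i (e_i^{a+1} in the paper).
   A square matrix of size m is a function nat \<Rightarrow> nat \<Rightarrow> real that vanishes
   outside {0..<m} \<times> {0..<m}.  An element of gl(n_1) x ... x gl(n_d) is a
   function Z :: nat \<Rightarrow> nat \<Rightarrow> nat \<Rightarrow> real, Z i being the i-th block. *)

type_synonym mat = "nat \<Rightarrow> nat \<Rightarrow> real"
type_synonym tup = "nat \<Rightarrow> mat"
type_synonym tensor = "(nat \<Rightarrow> nat) \<Rightarrow> real"

definition mmul :: "nat \<Rightarrow> mat \<Rightarrow> mat \<Rightarrow> mat" where
  "mmul m A B = (\<lambda>a b. if a < m \<and> b < m then (\<Sum>c<m. A a c * B c b) else 0)"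

definition mident :: "nat \<Rightarrow> mat" where
  "mident m = (\<lambda>a b. if a < m \<and> b < m \<and> a = b then 1 else 0)"

fun mpow :: "nat \<Rightarrow> mat \<Rightarrow> nat \<Rightarrow> mat" where
  "mpow m A 0 = mident m"
| "mpow m A (Suc k) = mmul m (mpow m A k) A"

definition mexp :: "nat \<Rightarrow> mat \<Rightarrow> mat" where
  "mexp m A = (\<lambda>a b. (\<Sum>k. mpow m A k a b / fact k))"

definition minv :: "nat \<Rightarrow> mat \<Rightarrow> mat" where
  "minv m A = (SOME B. (\<forall>a b. (a \<ge> m \<or> b \<ge> m) \<longrightarrow> B a b = 0)
                      \<and> mmul m A B = mident m \<and> mmul m B A = mident m)"

definition gl_alg :: "nat \<Rightarrow> (nat \<Rightarrow> nat) \<Rightarrow> tup set" where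
  "gl_alg d n = {Z. \<forall>i a b. (i \<notin> {1..d} \<or> a \<ge> n i \<or> b \<ge> n i) \<longrightarrow> Z i a b = 0}"

definition GL_grp :: "nat \<Rightarrow> (nat \<Rightarrow> nat) \<Rightarrow> tup set" where
  "GL_grp d n = {g \<in> gl_alg d n. \<forall>i\<in>{1..d}. \<exists>B.
      (\<forall>a b. (a \<ge> n i \<or> b \<ge> n i) \<longrightarrow> B a b = 0)
      \<and> mmul (n i) (g i) B = mident (n i) \<and> mmul (n i) B (g i) = mident (n i)}"

definition gexp :: "nat \<Rightarrow> (nat \<Rightarrow> nat) \<Rightarrow> tup \<Rightarrow> tup" where
  "gexp d n Z = (\<lambda>i. if i \<in> {1..d} then mexp (n i) (Z i) else (\<lambda>a b. 0))"

definition gscale :: "real \<Rightarrow> tup \<Rightarrow> tup" where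
  "gscale t Z = (\<lambda>i a b. t * Z i a b)"

definition gadd :: "tup \<Rightarrow> tup \<Rightarrow> tup" where
  "gadd Z Y = (\<lambda>i a b. Z i a b + Y i a b)"

definition gconj :: "nat \<Rightarrow> (nat \<Rightarrow> nat) \<Rightarrow> tup \<Rightarrow> tup \<Rightarrow> tup" where
  "gconj d n h Z = (\<lambda>i. if i \<in> {1..d}
       then mmul (n i) (mmul (n i) (h i) (Z i)) (minv (n i) (h i)) else (\<lambda>a b. 0))"

definition multi_idx :: "nat \<Rightarrow> (nat \<Rightarrow> nat) \<Rightarrow> (nat \<Rightarrow> nat) set" where
  "multi_idx d n = {j. \<forall>i. (i \<in> {1..d} \<longrightarrow> j i < n i) \<and> (i \<notin> {1..d} \<longrightarrow> j i = 0)}"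

definition act :: "nat \<Rightarrow> (nat \<Rightarrow> nat) \<Rightarrow> tup \<Rightarrow> tensor \<Rightarrow> tensor" where
  "act d n g T = (\<lambda>j. if j \<in> multi_idx d n
      then (\<Sum>k\<in>multi_idx d n. (\<Prod>i\<in>{1..d}. g i (j i) (k i)) * T k) else 0)"

definition basis_tensor :: "(nat \<Rightarrow> nat) \<Rightarrow> tensor" where
  "basis_tensor k = (\<lambda>j. if j = k then 1 else 0)"

text \<open>Index tuples alpha = (alpha_1,...,alpha_{d-1}), alpha_i < s_i (0-based),
  extended by alpha_0 = alpha_d = 0.\<close>
definition alpha_set :: "nat \<Rightarrow> (nat \<Rightarrow> nat) \<Rightarrow> (nat \<Rightarrow> nat) set" where
  "alpha_set d s = {\<alpha>. \<forall>i. (i \<in> {1..d-1} \<longrightarrow> \<alpha> i < s i) \<and> (i \<notin> {1..d-1} \<longrightarrow> \<alpha> i = 0)}"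

text \<open>Lexicographic bijection iota_i(a,b) = a * s_i + b (0-based, first argument most significant).\<close>
definition iota :: "(nat \<Rightarrow> nat) \<Rightarrow> nat \<Rightarrow> nat \<Rightarrow> nat \<Rightarrow> nat" where
  "iota s i a b = a * s i + b"

text \<open>The multi-index (alpha_1, iota_2(alpha_1,alpha_2), ..., iota_{d-1}(..), alpha_{d-1});
  for i = 1 and i = d this reduces to alpha_1 resp. alpha_{d-1} since alpha_0 = alpha_d = 0, s_d = 1.\<close>
definition mps_index :: "nat \<Rightarrow> (nat \<Rightarrow> nat) \<Rightarrow> (nat \<Rightarrow> nat) \<Rightarrow> (nat \<Rightarrow> nat)" where
  "mps_index d s \<alpha> = (\<lambda>i. if i = 1 then \<alpha> 1
                         else if i = d then \<alpha> (d - 1)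
                         else if 2 \<le> i \<and> i \<le> d - 1 then iota s i (\<alpha> (i - 1)) (\<alpha> i)
                         else 0)"

definition T_mps :: "nat \<Rightarrow> (nat \<Rightarrow> nat) \<Rightarrow> tensor" where
  "T_mps d s = (\<lambda>j. \<Sum>\<alpha>\<in>alpha_set d s. basis_tensor (mps_index d s \<alpha>) j)"

definition stab :: "nat \<Rightarrow> (nat \<Rightarrow> nat) \<Rightarrow> tensor \<Rightarrow> tup set" where
  "stab d n T = {g \<in> GL_grp d n. act d n g T = T}"

definition lie_alg :: "nat \<Rightarrow> (nat \<Rightarrow> nat) \<Rightarrow> tup set \<Rightarrow> tup set" where
  "lie_alg d n H = {Z \<in> gl_alg d n. \<forall>t::real. gexp d n (gscale t Z) \<in> H}"

definition lin_subspace :: "nat \<Rightarrow> (nat \<Rightarrow> nat) \<Rightarrow> tup set \<Rightarrow> bool" where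
  "lin_subspace d n P \<longleftrightarrow> P \<subseteq> gl_alg d n \<and> (\<lambda>i a b. 0) \<in> P
     \<and> (\<forall>X\<in>P. \<forall>Y\<in>P. gadd X Y \<in> P) \<and> (\<forall>X\<in>P. \<forall>c. gscale c X \<in> P)"

definition reductive :: "nat \<Rightarrow> (nat \<Rightarrow> nat) \<Rightarrow> tup set \<Rightarrow> bool" where
  "reductive d n H \<longleftrightarrow> (\<exists>P. lin_subspace d n P
      \<and> P \<inter> lie_alg d n H = {\<lambda>i a b. 0}
      \<and> {gadd X Y | X Y. X \<in> P \<and> Y \<in> lie_alg d n H} = gl_alg d n
      \<and> (\<forall>h\<in>H. gconj d n h ` P \<subseteq> P))"

definition ginner :: "nat \<Rightarrow> (nat \<Rightarrow> nat) \<Rightarrow> tup \<Rightarrow> tup \<Rightarrow> real" where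
  "ginner d n Z Y = (\<Sum>i\<in>{1..d}. \<Sum>a<n i. \<Sum>b<n i. Z i a b * Y i a b)"

definition orth_compl :: "nat \<Rightarrow> (nat \<Rightarrow> nat) \<Rightarrow> tup set \<Rightarrow> tup set" where
  "orth_compl d n S = {Z \<in> gl_alg d n. \<forall>Y\<in>S. ginner d n Z Y = 0}"

end

theory Submission
  imports Defs
begin


definition sc :: "real \<Rightarrow> mat \<Rightarrow> mat" where "sc t A = (\<lambda>a b. t * A a b)"
definition msupp :: "nat \<Rightarrow> mat \<Rightarrow> bool" where
  "msupp m A \<longleftrightarrow> (\<forall>a b. (a \<ge> m \<or> b \<ge> m) \<longrightarrow> A a b = 0)"

lemma mmul_supp: "msupp m (mmul m A B)" unfolding msupp_def mmul_def by auto
lemma mident_supp: "msupp m (mident m)" by (simp add: msupp_def mident_def)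
lemma mpow_supp: "msupp m (mpow m A k)" by (cases k) (simp_all add: mident_supp mmul_supp)

lemma mmul_out: "\<not>(a < m \<and> b < m) \<Longrightarrow> mmul m A B a b = 0" unfolding mmul_def by auto
lemma mmul_in: "a < m \<Longrightarrow> b < m \<Longrightarrow> mmul m A B a b = (\<Sum>c<m. A a c * B c b)" unfolding mmul_def by auto

lemma mmul_assoc: "mmul m (mmul m A B) C = mmul m A (mmul m B C)"
proof (intro ext)
  fix a b
  show "mmul m (mmul m A B) C a b = mmul m A (mmul m B C) a b"
  proof (cases "a < m \<and> b < m")
    case True
    have "mmul m (mmul m A B) C a b = (\<Sum>c<m. (\<Sum>e<m. A a e * B e c) * C c b)"
      using True by (simp add: mmul_in)
    also have "\<dots> = (\<Sum>c<m. \<Sum>e<m. A a e * B e c * C c b)" by (simp add: sum_distrib_right)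
    also have "\<dots> = (\<Sum>e<m. \<Sum>c<m. A a e * B e c * C c b)" by (rule sum.swap)
    also have "\<dots> = (\<Sum>e<m. A a e * (\<Sum>c<m. B e c * C c b))"
      by (simp add: sum_distrib_left mult.assoc)
    also have "\<dots> = mmul m A (mmul m B C) a b" using True by (simp add: mmul_in)
    finally show ?thesis .
  qed (auto simp add: mmul_out)
qed

lemma mmul_ident_left_gen: "mmul m (mident m) A = (\<lambda>a b. if a < m \<and> b < m then A a b else 0)"
proof (intro ext)
  fix a b show "mmul m (mident m) A a b = (if a < m \<and> b < m then A a b else 0)"
  proof (cases "a < m \<and> b < m")
    case True
    then have "mmul m (mident m) A a b = (\<Sum>c<m. mident m a c * A c b)"
      by (simp add: mmul_in)
    also have "\<dots> = (\<Sum>c<m. if c = a then A a b else 0)"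
      by (rule sum.cong) (auto simp: mident_def)
    also have "\<dots> = A a b" using True by simp
    finally show ?thesis using True by simp
  qed (auto simp add: mmul_out)
qed
lemma mmul_ident_right_gen: "mmul m A (mident m) = (\<lambda>a b. if a < m \<and> b < m then A a b else 0)"
proof (intro ext)
  fix a b show "mmul m A (mident m) a b = (if a < m \<and> b < m then A a b else 0)"
  proof (cases "a < m \<and> b < m")
    case True
    then have "mmul m A (mident m) a b = (\<Sum>c<m. A a c * mident m c b)"
      by (simp add: mmul_in)
    also have "\<dots> = (\<Sum>c<m. if c = b then A a b else 0)"
      by (rule sum.cong) (auto simp: mident_def)
    also have "\<dots> = A a b" using True by simp
    finally show ?thesis using True by simp
  qed (auto simp add: mmul_out)
qed
lemma msupp_trunc: "msupp m A \<Longrightarrow> (\<lambda>a b. if a < m \<and> b < m then A a b else 0) = A"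
  by (auto simp: msupp_def fun_eq_iff)
lemma mmul_ident_left: "msupp m A \<Longrightarrow> mmul m (mident m) A = A"
  by (simp add: mmul_ident_left_gen msupp_trunc)
lemma mmul_ident_right: "msupp m A \<Longrightarrow> mmul m A (mident m) = A"
  by (simp add: mmul_ident_right_gen msupp_trunc)

lemma mpow_comm: "mmul m (mpow m A k) A = mmul m A (mpow m A k)"
proof (induction k)
  case 0 then show ?case by (simp add: mmul_ident_left_gen mmul_ident_right_gen)
next
  case (Suc k)
  have "mmul m (mpow m A (Suc k)) A = mmul m (mmul m (mpow m A k) A) A" by simp
  also have "\<dots> = mmul m (mmul m A (mpow m A k)) A" using Suc by simp
  also have "\<dots> = mmul m A (mpow m A (Suc k))" by (simp add: mmul_assoc)
  finally show ?case .
qed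

lemma mmul_sc_left: "mmul m (sc t A) B = sc t (mmul m A B)"
  by (auto simp: mmul_def sc_def fun_eq_iff sum_distrib_left mult.assoc)
lemma mmul_sc_right: "mmul m A (sc t B) = sc t (mmul m A B)"
  by (auto simp: mmul_def sc_def fun_eq_iff sum_distrib_left mult.left_commute)

lemma mpow_sc: "mpow m (sc t A) k = sc (t ^ k) (mpow m A k)"
proof (induction k)
  case 0 then show ?case by (simp add: sc_def)
next
  case (Suc k)
  have "mpow m (sc t A) (Suc k) = mmul m (sc (t ^ k) (mpow m A k)) (sc t A)" using Suc by simp
  also have "\<dots> = sc (t ^ Suc k) (mpow m A (Suc k))"
    unfolding mmul_sc_left mmul_sc_right by (simp add: sc_def fun_eq_iff mult_ac)
  finally show ?case .
qed

definition mbnd :: "nat \<Rightarrow> mat \<Rightarrow> real" where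
  "mbnd m A = real m * (\<Sum>a<m. \<Sum>b<m. \<bar>A a b\<bar>)"

lemma mbnd_nonneg: "0 \<le> mbnd m A" by (simp add: mbnd_def sum_nonneg)

lemma entry_le: fixes A :: mat shows "a < m \<Longrightarrow> b < m \<Longrightarrow> \<bar>A a b\<bar> \<le> (\<Sum>a<m. \<Sum>b<m. \<bar>A a b\<bar>)"
proof -
  assume ab: "a < m" "b < m"
  have "\<bar>A a b\<bar> \<le> (\<Sum>b<m. \<bar>A a b\<bar>)"
    using ab by (intro member_le_sum[where f="\<lambda>b. \<bar>A a b\<bar>"]) auto
  also have "\<dots> \<le> (\<Sum>a<m. \<Sum>b<m. \<bar>A a b\<bar>)"
    using ab by (intro member_le_sum[where f="\<lambda>a. \<Sum>b<m. \<bar>A a b\<bar>"]) (auto intro: sum_nonneg)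
  finally show ?thesis .
qed

lemma mpow_bound: "\<bar>mpow m A k a b\<bar> \<le> mbnd m A ^ k"
proof (induction k arbitrary: a b)
  case 0 then show ?case by (simp add: mident_def)
next
  case (Suc k)
  let ?M = "(\<Sum>a<m. \<Sum>b<m. \<bar>A a b\<bar>)"
  show ?case
  proof (cases "a < m \<and> b < m")
    case True
    have "\<bar>mpow m A (Suc k) a b\<bar> = \<bar>\<Sum>c<m. mpow m A k a c * A c b\<bar>"
      using True by (simp add: mmul_in)
    also have "\<dots> \<le> (\<Sum>c<m. \<bar>mpow m A k a c\<bar> * \<bar>A c b\<bar>)"
      by (rule order_trans[OF sum_abs]) (simp add: abs_mult)
    also have "\<dots> \<le> (\<Sum>c<m. mbnd m A ^ k * ?M)"
      using True by (intro sum_mono mult_mono Suc.IH entry_le) (auto intro: zero_le_power mbnd_nonneg)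
    also have "\<dots> = mbnd m A ^ Suc k" by (simp add: mbnd_def mult_ac)
    finally show ?thesis .
  next
    case False then show ?thesis by (simp add: mmul_out mbnd_nonneg)
  qed
qed

definition cf :: "nat \<Rightarrow> mat \<Rightarrow> nat \<Rightarrow> nat \<Rightarrow> nat \<Rightarrow> real" where
  "cf m A a b k = mpow m A k a b / fact k"

lemma cf_summable: "summable (\<lambda>k. cf m A a b k * x ^ k)"
proof (rule summable_comparison_test[OF _ summable_exp[of "mbnd m A * \<bar>x\<bar>"]])
  show "\<exists>N. \<forall>k\<ge>N. norm (cf m A a b k * x ^ k) \<le> inverse (fact k) * (mbnd m A * \<bar>x\<bar>) ^ k"
  proof (intro exI allI impI)
    fix k :: nat
    have "norm (cf m A a b k * x ^ k) = \<bar>mpow m A k a b\<bar> * \<bar>x\<bar> ^ k / fact k"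
      by (simp add: cf_def abs_mult power_abs)
    also have "\<dots> \<le> mbnd m A ^ k * \<bar>x\<bar> ^ k / fact k"
      by (intro divide_right_mono mult_right_mono mpow_bound) auto
    also have "\<dots> = inverse (fact k) * (mbnd m A * \<bar>x\<bar>) ^ k"
      by (simp add: power_mult_distrib field_simps)
    finally show "norm (cf m A a b k * x ^ k) \<le> inverse (fact k) * (mbnd m A * \<bar>x\<bar>) ^ k" .
  qed
qed

lemma mexp_sc: "mexp m (sc t A) a b = (\<Sum>k. cf m A a b k * t ^ k)"
  unfolding mexp_def mpow_sc by (simp add: sc_def cf_def mult_ac)

lemma mexp_zero: "mexp m (sc 0 A) = mident m"
proof (intro ext)
  fix a b
  have "mexp m (sc 0 A) a b = (\<Sum>k. cf m A a b k * 0 ^ k)" by (rule mexp_sc)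
  also have "\<dots> = cf m A a b 0" by (rule powser_zero)
  finally show "mexp m (sc 0 A) a b = mident m a b" by (simp add: cf_def)
qed

lemma mexp_supp: "msupp m (mexp m X)"
  unfolding msupp_def mexp_def
proof (intro allI impI)
  fix a b assume "m \<le> a \<or> m \<le> b"
  then have "\<And>k. mpow m X k a b = 0" using mpow_supp[of m X] by (auto simp: msupp_def)
  then show "(\<Sum>k. mpow m X k a b / fact k) = 0" by simp
qed


lemma mmul_suminf_left:
  assumes "\<And>a c. summable (\<lambda>k. F k a c)"
  shows "mmul m (\<lambda>a c. \<Sum>k. F k a c) B a b = (\<Sum>k. mmul m (F k) B a b)"
proof (cases "a < m \<and> b < m")
  case True
  have "mmul m (\<lambda>a c. \<Sum>k. F k a c) B a b = (\<Sum>c<m. (\<Sum>k. F k a c) * B c b)"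
    using True by (simp add: mmul_in)
  also have "\<dots> = (\<Sum>c<m. \<Sum>k. F k a c * B c b)"
    by (intro sum.cong refl suminf_mult2 assms)
  also have "\<dots> = (\<Sum>k. \<Sum>c<m. F k a c * B c b)"
    by (rule suminf_sum[symmetric]) (intro summable_mult2 assms)
  also have "\<dots> = (\<Sum>k. mmul m (F k) B a b)" using True by (simp add: mmul_in)
  finally show ?thesis .
qed (auto simp: mmul_out)

lemma mmul_suminf_right:
  assumes "\<And>a c. summable (\<lambda>k. F k a c)"
  shows "mmul m B (\<lambda>a c. \<Sum>k. F k a c) a b = (\<Sum>k. mmul m B (F k) a b)"
proof (cases "a < m \<and> b < m")
  case True
  have "mmul m B (\<lambda>a c. \<Sum>k. F k a c) a b = (\<Sum>c<m. B a c * (\<Sum>k. F k c b))"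
    using True by (simp add: mmul_in)
  also have "\<dots> = (\<Sum>c<m. \<Sum>k. B a c * F k c b)"
    by (intro sum.cong refl suminf_mult[symmetric] assms)
  also have "\<dots> = (\<Sum>k. \<Sum>c<m. B a c * F k c b)"
    by (rule suminf_sum[symmetric]) (intro summable_mult assms)
  also have "\<dots> = (\<Sum>k. mmul m B (F k) a b)" using True by (simp add: mmul_in)
  finally show ?thesis .
qed (auto simp: mmul_out)

lemma mexp_sc_fun: "mexp m (sc t A) = (\<lambda>a c. \<Sum>k. cf m A a c k * t ^ k)"
  by (intro ext mexp_sc)

lemma cf_term: "(\<lambda>a c. cf m A a c k * t ^ k) = sc (t ^ k / fact k) (mpow m A k)"
  by (auto simp: cf_def sc_def fun_eq_iff)

lemma mexp_mul_A: "mmul m (mexp m (sc t A)) A a b = (\<Sum>k. t ^ k / fact k * mpow m A (Suc k) a b)"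
proof -
  have "mmul m (mexp m (sc t A)) A a b = (\<Sum>k. mmul m (\<lambda>a c. cf m A a c k * t ^ k) A a b)"
    unfolding mexp_sc_fun by (rule mmul_suminf_left) (rule cf_summable)
  also have "\<dots> = (\<Sum>k. t ^ k / fact k * mpow m A (Suc k) a b)"
    unfolding cf_term mmul_sc_left by (simp add: sc_def)
  finally show ?thesis .
qed

lemma A_mul_mexp: "mmul m A (mexp m (sc t A)) a b = (\<Sum>k. t ^ k / fact k * mpow m A (Suc k) a b)"
proof -
  have "mmul m A (mexp m (sc t A)) a b = (\<Sum>k. mmul m A (\<lambda>a c. cf m A a c k * t ^ k) a b)"
    unfolding mexp_sc_fun by (rule mmul_suminf_right) (rule cf_summable)
  also have "\<dots> = (\<Sum>k. t ^ k / fact k * mpow m A (Suc k) a b)"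
    unfolding cf_term mmul_sc_right by (simp add: sc_def mpow_comm)
  finally show ?thesis .
qed

lemma mexp_comm: "mmul m (mexp m (sc t A)) A = mmul m A (mexp m (sc t A))"
  by (intro ext) (simp add: mexp_mul_A A_mul_mexp)

lemma cf_Suc: "cf m A a b (Suc n) * real (Suc n) = mpow m A (Suc n) a b / fact n"
proof -
  have "cf m A a b (Suc n) * real (Suc n) = mpow m A (Suc n) a b / (real (Suc n) * fact n) * real (Suc n)"
    by (simp only: cf_def fact_Suc of_nat_mult)
  also have "\<dots> = mpow m A (Suc n) a b / fact n"
    by (simp del: of_nat_Suc mpow.simps)
  finally show ?thesis .
qed

lemma deriv_summable: "summable (\<lambda>n. cf m A a b (Suc n) * real (Suc n) * x ^ n)"
proof -
  let ?B = "mbnd m A"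
  have s: "summable (\<lambda>n. ?B * (inverse (fact n) * (?B * \<bar>x\<bar>) ^ n))"
    by (intro summable_mult summable_exp)
  show ?thesis
  proof (rule summable_comparison_test[OF _ s], intro exI allI impI)
    fix n :: nat
    have "cf m A a b (Suc n) * real (Suc n) = mpow m A (Suc n) a b / fact n"
      by (rule cf_Suc)
    then have "norm (cf m A a b (Suc n) * real (Suc n) * x ^ n) = \<bar>mpow m A (Suc n) a b\<bar> * \<bar>x\<bar> ^ n / fact n"
      by (simp add: abs_mult power_abs del: mpow.simps)
    also have "\<dots> \<le> ?B ^ Suc n * \<bar>x\<bar> ^ n / fact n"
      by (intro divide_right_mono mult_right_mono mpow_bound) auto
    also have "\<dots> = ?B * (inverse (fact n) * (?B * \<bar>x\<bar>) ^ n)"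
      by (simp add: power_mult_distrib field_simps)
    finally show "norm (cf m A a b (Suc n) * real (Suc n) * x ^ n) \<le> ?B * (inverse (fact n) * (?B * \<bar>x\<bar>) ^ n)" .
  qed
qed

lemma mexp_deriv: "DERIV (\<lambda>t. mexp m (sc t A) a b) t :> mmul m (mexp m (sc t A)) A a b"
proof -
  let ?g = "\<lambda>x. \<Sum>n. cf m A a b (Suc n) * x ^ Suc n"
  have eq: "mexp m (sc x A) a b = ?g x + cf m A a b 0" for x
  proof -
    have "?g x = (\<Sum>n. cf m A a b n * x ^ n) - cf m A a b 0 * x ^ 0"
      using suminf_split_head[OF cf_summable[of m A a b x]] by simp
    then show ?thesis by (simp add: mexp_sc)
  qed
  have d: "DERIV ?g t :> (\<Sum>n. cf m A a b (Suc n) * real (Suc n) * t ^ n)"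
    apply (rule DERIV_power_series'[where R="\<bar>t\<bar> + 1"])
      apply (rule deriv_summable)
     apply auto
    done
  have v: "(\<Sum>n. cf m A a b (Suc n) * real (Suc n) * t ^ n) = mmul m (mexp m (sc t A)) A a b"
    unfolding mexp_mul_A
  proof (rule arg_cong[where f=suminf], rule ext)
    fix n
    show "cf m A a b (Suc n) * real (Suc n) * t ^ n = t ^ n / fact n * mpow m A (Suc n) a b"
      using cf_Suc[of m A a b n] by (simp del: mpow.simps of_nat_Suc)
  qed
  have "DERIV (\<lambda>x. ?g x + cf m A a b 0) t :> mmul m (mexp m (sc t A)) A a b"
    using DERIV_add[OF d DERIV_const[of "cf m A a b 0"]] v by simp
  then show ?thesis unfolding eq[symmetric] .
qed


lemma sc_sc: "sc x (sc y A) = sc (x * y) A" by (simp add: sc_def fun_eq_iff mult_ac)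

lemma mexp_comm_neg: "mmul m (mexp m (sc (-x) A)) A = mmul m A (mexp m (sc (-x) A))"
proof -
  have "mmul m (mexp m (sc x (sc (-1) A))) (sc (-1) A) = mmul m (sc (-1) A) (mexp m (sc x (sc (-1) A)))"
    by (rule mexp_comm)
  then have "sc (-1) (mmul m (mexp m (sc (-x) A)) A) = sc (-1) (mmul m A (mexp m (sc (-x) A)))"
    by (simp add: sc_sc mmul_sc_left mmul_sc_right)
  then have "sc (-1) (sc (-1) (mmul m (mexp m (sc (-x) A)) A)) = sc (-1) (sc (-1) (mmul m A (mexp m (sc (-x) A))))"
    by simp
  then show ?thesis by (simp add: sc_sc sc_def)
qed

lemma mexp_deriv_neg: "DERIV (\<lambda>t. mexp m (sc (-t) A) a b) t :> - mmul m (mexp m (sc (-t) A)) A a b"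
proof -
  have "DERIV (\<lambda>t. mexp m (sc t (sc (-1) A)) a b) t :> mmul m (mexp m (sc t (sc (-1) A))) (sc (-1) A) a b"
    by (rule mexp_deriv)
  moreover have "sc t (sc (-1) A) = sc (-t) A" for t by (simp add: sc_sc)
  ultimately show ?thesis unfolding mmul_sc_right by (simp add: sc_def)
qed

lemma mexp_inv: "mmul m (mexp m (sc t A)) (mexp m (sc (-t) A)) = mident m"
proof (intro ext)
  fix a b
  show "mmul m (mexp m (sc t A)) (mexp m (sc (-t) A)) a b = mident m a b"
  proof (cases "a < m \<and> b < m")
    case True
    let ?E = "\<lambda>x. mexp m (sc x A)" and ?F = "\<lambda>x. mexp m (sc (-x) A)"
    let ?P = "\<lambda>x. \<Sum>c<m. ?E x a c * ?F x c b"
    have d: "DERIV ?P x :> 0" for x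
    proof -
      have 1: "DERIV ?P x :> (\<Sum>c<m. mmul m (?E x) A a c * ?F x c b + (- mmul m (?F x) A c b) * ?E x a c)"
        by (intro DERIV_sum DERIV_mult mexp_deriv mexp_deriv_neg)
      have "(\<Sum>c<m. mmul m (?E x) A a c * ?F x c b + (- mmul m (?F x) A c b) * ?E x a c)
           = mmul m (mmul m (?E x) A) (?F x) a b - mmul m (?E x) (mmul m (?F x) A) a b"
        using True by (simp add: mmul_in sum_subtractf algebra_simps)
      also have "\<dots> = 0"
        by (simp add: mmul_assoc mexp_comm_neg)
      finally show ?thesis using 1 by simp
    qed
    have "?P t = ?P 0" by (rule DERIV_isconst_all) (use d in blast)
    also have "\<dots> = mmul m (mident m) (mident m) a b"
      using True by (simp add: mmul_in mexp_zero)
    also have "\<dots> = mident m a b" by (simp add: mmul_ident_left mident_supp)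
    finally show ?thesis using True by (simp add: mmul_in)
  qed (auto simp: mmul_out mident_def)
qed


definition box :: "nat set \<Rightarrow> (nat \<Rightarrow> nat) \<Rightarrow> (nat \<Rightarrow> nat) set" where
  "box I n = {k. \<forall>i. (i \<in> I \<longrightarrow> k i < n i) \<and> (i \<notin> I \<longrightarrow> k i = 0)}"

lemma multi_box: "multi_idx d n = box {1..d} n" by (simp add: multi_idx_def box_def)
lemma alpha_box: "alpha_set d s = box {1..d-1} s" by (simp add: alpha_set_def box_def)

lemma box_empty: "box {} n = {\<lambda>_. 0}" by (auto simp: box_def)

lemma box_insert: "x \<notin> I \<Longrightarrow> box (insert x I) n = (\<lambda>(c,k). k(x:=c)) ` ({..<n x} \<times> box I n)"
proof (intro set_eqI iffI)
  fix K assume "x \<notin> I" "K \<in> box (insert x I) n"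
  then have "K = (\<lambda>(c,k). k(x:=c)) (K x, K(x:=0))" "(K x, K(x:=0)) \<in> {..<n x} \<times> box I n"
    by (auto simp: box_def)
  then show "K \<in> (\<lambda>(c,k). k(x:=c)) ` ({..<n x} \<times> box I n)" by blast
qed (auto simp: box_def)

lemma box_insert_inj: "x \<notin> I \<Longrightarrow> inj_on (\<lambda>(c,k). k(x:=c)) ({..<n x} \<times> box I n)"
proof (rule inj_onI, clarify)
  fix c k c' k' assume x: "x \<notin> I" and mem: "k \<in> box I n" "k' \<in> box I n" and eq: "k(x := c) = k'(x := c')"
  have "c = c'" using fun_cong[OF eq, of x] by simp
  moreover have "k = k'"
  proof
    fix i show "k i = k' i"
      using fun_cong[OF eq, of i] mem x by (cases "i = x") (auto simp: box_def)
  qed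
  ultimately show "c = c' \<and> k = k'" by simp
qed

lemma finite_box: "finite I \<Longrightarrow> finite (box I n)"
  by (induction I rule: finite_induct) (auto simp: box_empty box_insert)

lemma sum_box_insert:
  assumes "finite I" "x \<notin> I"
  shows "(\<Sum>k\<in>box (insert x I) n. f k) = (\<Sum>c<n x. \<Sum>k\<in>box I n. f (k(x:=c)))"
proof -
  have "(\<Sum>k\<in>box (insert x I) n. f k) = (\<Sum>p\<in>{..<n x} \<times> box I n. f ((\<lambda>(c,k). k(x:=c)) p))"
    unfolding box_insert[OF assms(2)] by (rule sum.reindex[OF box_insert_inj[OF assms(2)], unfolded comp_def])
  also have "\<dots> = (\<Sum>c<n x. \<Sum>k\<in>box I n. f (k(x:=c)))"
    apply (subst sum.cartesian_product)
    apply (rule sum.cong)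
     apply auto
    done
  finally show ?thesis .
qed

lemma sum_box_split:
  assumes "finite I" "p \<in> I"
  shows "(\<Sum>k\<in>box I n. f k) = (\<Sum>c<n p. \<Sum>k\<in>box (I - {p}) n. f (k(p:=c)))"
proof -
  have "I = insert p (I - {p})" using assms by auto
  then have "(\<Sum>k\<in>box I n. f k) = (\<Sum>k\<in>box (insert p (I - {p})) n. f k)" by simp
  also have "\<dots> = (\<Sum>c<n p. \<Sum>k\<in>box (I - {p}) n. f (k(p:=c)))"
    by (rule sum_box_insert) (use assms in auto)
  finally show ?thesis .
qed

lemma sum_prod_box:
  fixes F :: "nat \<Rightarrow> nat \<Rightarrow> real"
  assumes "finite I"
  shows "(\<Sum>k\<in>box I n. \<Prod>i\<in>I. F i (k i)) = (\<Prod>i\<in>I. \<Sum>c<n i. F i c)"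
  using assms
proof (induction I rule: finite_induct)
  case empty then show ?case by (simp add: box_empty)
next
  case (insert x I)
  have "(\<Sum>k\<in>box (insert x I) n. \<Prod>i\<in>insert x I. F i (k i))
      = (\<Sum>c<n x. \<Sum>k\<in>box I n. \<Prod>i\<in>insert x I. F i ((k(x:=c)) i))"
    by (rule sum_box_insert) (use insert in auto)
  also have "\<dots> = (\<Sum>c<n x. \<Sum>k\<in>box I n. F x c * (\<Prod>i\<in>I. F i (k i)))"
  proof (intro sum.cong refl)
    fix c k
    have "(\<Prod>i\<in>I. F i ((k(x:=c)) i)) = (\<Prod>i\<in>I. F i (k i))"
      by (rule prod.cong) (use insert in auto)
    then show "(\<Prod>i\<in>insert x I. F i ((k(x:=c)) i)) = F x c * (\<Prod>i\<in>I. F i (k i))"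
      using insert by simp
  qed
  also have "\<dots> = (\<Sum>c<n x. F x c) * (\<Sum>k\<in>box I n. \<Prod>i\<in>I. F i (k i))"
    by (rule sum_product[symmetric])
  also have "\<dots> = (\<Prod>i\<in>insert x I. \<Sum>c<n i. F i c)" using insert by simp
  finally show ?case .
qed

definition ins :: "nat \<Rightarrow> (nat \<Rightarrow> nat) \<Rightarrow> nat \<Rightarrow> mat \<Rightarrow> tup" where
  "ins d n i M = (\<lambda>m. if m \<in> {1..d} then (if m = i then M else mident (n m)) else (\<lambda>a b. 0))"
definition tmul :: "nat \<Rightarrow> (nat \<Rightarrow> nat) \<Rightarrow> tup \<Rightarrow> tup \<Rightarrow> tup" where
  "tmul d n g h = (\<lambda>i. if i \<in> {1..d} then mmul (n i) (g i) (h i) else (\<lambda>a b. 0))"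
definition idt :: "nat \<Rightarrow> (nat \<Rightarrow> nat) \<Rightarrow> tup" where
  "idt d n = (\<lambda>m. if m \<in> {1..d} then mident (n m) else (\<lambda>a b. 0))"

lemma act_out: "j \<notin> multi_idx d n \<Longrightarrow> act d n g S j = 0" by (simp add: act_def)
lemma act_in: "j \<in> multi_idx d n \<Longrightarrow> act d n g S j = (\<Sum>k\<in>multi_idx d n. (\<Prod>i\<in>{1..d}. g i (j i) (k i)) * S k)"
  by (simp add: act_def)

lemma multi_lt: "j \<in> multi_idx d n \<Longrightarrow> i \<in> {1..d} \<Longrightarrow> j i < n i" by (simp add: multi_idx_def)
lemma multi_out: "j \<in> multi_idx d n \<Longrightarrow> i \<notin> {1..d} \<Longrightarrow> j i = 0" by (simp add: multi_idx_def)
lemma multi_upd: "j \<in> multi_idx d n \<Longrightarrow> i \<in> {1..d} \<Longrightarrow> c < n i \<Longrightarrow> j(i:=c) \<in> multi_idx d n"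
  by (simp add: multi_idx_def)

lemma act_cong_g:
  assumes "\<And>i a b. i \<in> {1..d} \<Longrightarrow> a < n i \<Longrightarrow> b < n i \<Longrightarrow> g i a b = g' i a b"
  shows "act d n g S = act d n g' S"
proof (intro ext)
  fix j show "act d n g S j = act d n g' S j"
  proof (cases "j \<in> multi_idx d n")
    case True
    show ?thesis unfolding act_in[OF True]
    proof (rule sum.cong[OF refl])
      fix k assume k: "k \<in> multi_idx d n"
      have "(\<Prod>i\<in>{1..d}. g i (j i) (k i)) = (\<Prod>i\<in>{1..d}. g' i (j i) (k i))"
        by (rule prod.cong[OF refl]) (rule assms, use True k in \<open>auto simp: multi_idx_def\<close>)
      then show "(\<Prod>i\<in>{1..d}. g i (j i) (k i)) * S k = (\<Prod>i\<in>{1..d}. g' i (j i) (k i)) * S k" by simp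
    qed
  qed (simp add: act_out)
qed

lemma act_cong_S:
  assumes "\<And>k. k \<in> multi_idx d n \<Longrightarrow> S k = S' k"
  shows "act d n g S = act d n g S'"
  unfolding act_def by (intro ext) (simp add: assms cong: sum.cong)

lemma finite_multi: "finite (multi_idx d n)" by (simp add: multi_box finite_box)

lemma act_comp: "act d n g (act d n h S) = act d n (tmul d n g h) S"
proof (intro ext)
  fix j show "act d n g (act d n h S) j = act d n (tmul d n g h) S j"
  proof (cases "j \<in> multi_idx d n")
    case True
    let ?M = "multi_idx d n"
    have "act d n g (act d n h S) j = (\<Sum>k\<in>?M. (\<Prod>i\<in>{1..d}. g i (j i) (k i)) * (\<Sum>l\<in>?M. (\<Prod>i\<in>{1..d}. h i (k i) (l i)) * S l))"
      using True by (simp add: act_in cong: sum.cong)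
    also have "\<dots> = (\<Sum>k\<in>?M. \<Sum>l\<in>?M. (\<Prod>i\<in>{1..d}. g i (j i) (k i) * h i (k i) (l i)) * S l)"
      by (simp add: sum_distrib_left prod.distrib mult.assoc)
    also have "\<dots> = (\<Sum>l\<in>?M. \<Sum>k\<in>?M. (\<Prod>i\<in>{1..d}. g i (j i) (k i) * h i (k i) (l i)) * S l)"
      by (rule sum.swap)
    also have "\<dots> = (\<Sum>l\<in>?M. (\<Sum>k\<in>?M. \<Prod>i\<in>{1..d}. g i (j i) (k i) * h i (k i) (l i)) * S l)"
      by (simp add: sum_distrib_right)
    also have "\<dots> = (\<Sum>l\<in>?M. (\<Prod>i\<in>{1..d}. \<Sum>c<n i. g i (j i) c * h i c (l i)) * S l)"
    proof (rule sum.cong[OF refl])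
      fix l
      have "(\<Sum>k\<in>box {1..d} n. \<Prod>i\<in>{1..d}. g i (j i) (k i) * h i (k i) (l i)) = (\<Prod>i\<in>{1..d}. \<Sum>c<n i. g i (j i) c * h i c (l i))"
        by (rule sum_prod_box[where F="\<lambda>i c. g i (j i) c * h i c (l i)"]) simp
      then show "(\<Sum>k\<in>?M. \<Prod>i\<in>{1..d}. g i (j i) (k i) * h i (k i) (l i)) * S l = (\<Prod>i\<in>{1..d}. \<Sum>c<n i. g i (j i) c * h i c (l i)) * S l"
        by (simp add: multi_box)
    qed
    also have "\<dots> = (\<Sum>l\<in>?M. (\<Prod>i\<in>{1..d}. tmul d n g h i (j i) (l i)) * S l)"
    proof (intro sum.cong refl arg_cong2[where f="(*)"] prod.cong)
      fix l i assume "l \<in> ?M" "i \<in> {1..d}"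
      then show "(\<Sum>c<n i. g i (j i) c * h i c (l i)) = tmul d n g h i (j i) (l i)"
        using True by (simp add: tmul_def mmul_in multi_lt)
    qed
    also have "\<dots> = act d n (tmul d n g h) S j" using True by (simp add: act_in)
    finally show ?thesis .
  qed (simp add: act_out)
qed

lemma act_ins:
  assumes j: "j \<in> multi_idx d n" and i: "i \<in> {1..d}"
  shows "act d n (ins d n i M) S j = (\<Sum>c<n i. M (j i) c * S (j(i:=c)))"
proof -
  let ?I = "{1..d}"
  have "act d n (ins d n i M) S j = (\<Sum>k\<in>box ?I n. (\<Prod>m\<in>?I. ins d n i M m (j m) (k m)) * S k)"
    using j by (simp add: act_in multi_box)
  also have "\<dots> = (\<Sum>c<n i. \<Sum>k\<in>box (?I - {i}) n. (\<Prod>m\<in>?I. ins d n i M m (j m) ((k(i:=c)) m)) * S (k(i:=c)))"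
    by (rule sum_box_split) (use i in auto)
  also have "\<dots> = (\<Sum>c<n i. \<Sum>k\<in>box (?I - {i}) n. if k = j(i:=0) then M (j i) c * S (j(i:=c)) else 0)"
  proof (intro sum.cong refl)
    fix c k assume k: "k \<in> box (?I - {i}) n"
    have pr: "(\<Prod>m\<in>?I. ins d n i M m (j m) ((k(i:=c)) m)) = M (j i) c * (\<Prod>m\<in>?I - {i}. mident (n m) (j m) (k m))"
    proof -
      have "(\<Prod>m\<in>?I. ins d n i M m (j m) ((k(i:=c)) m)) = ins d n i M i (j i) ((k(i:=c)) i) * (\<Prod>m\<in>?I - {i}. ins d n i M m (j m) ((k(i:=c)) m))"
        by (rule prod.remove) (use i in auto)
      also have "(\<Prod>m\<in>?I - {i}. ins d n i M m (j m) ((k(i:=c)) m)) = (\<Prod>m\<in>?I - {i}. mident (n m) (j m) (k m))"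
        by (rule prod.cong) (auto simp: ins_def)
      finally show ?thesis using i by (simp add: ins_def)
    qed
    show "(\<Prod>m\<in>?I. ins d n i M m (j m) ((k(i:=c)) m)) * S (k(i:=c)) = (if k = j(i:=0) then M (j i) c * S (j(i:=c)) else 0)"
    proof (cases "k = j(i:=0)")
      case True
      have "(\<Prod>m\<in>?I - {i}. mident (n m) (j m) (k m)) = 1"
        using True j by (intro prod.neutral) (auto simp: mident_def multi_lt)
      then show ?thesis using pr True by simp
    next
      case False
      then obtain m where m: "k m \<noteq> (j(i:=0)) m" by (metis ext)
      have "m \<in> ?I - {i}"
      proof (rule ccontr)
        assume "m \<notin> ?I - {i}"
        then have "k m = 0" using k by (simp add: box_def)
        moreover have "(j(i:=0)) m = 0" using \<open>m \<notin> ?I - {i}\<close> j by (auto simp: multi_out)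
        ultimately show False using m by simp
      qed
      moreover have "mident (n m) (j m) (k m) = 0" using m \<open>m \<in> ?I - {i}\<close> by (simp add: mident_def)
      ultimately have "(\<Prod>m\<in>?I - {i}. mident (n m) (j m) (k m)) = 0"
        by (intro prod_zero) auto
      then show ?thesis using pr False by simp
    qed
  qed
  also have "\<dots> = (\<Sum>c<n i. M (j i) c * S (j(i:=c)))"
  proof (intro sum.cong refl)
    fix c
    have "j(i:=0) \<in> box (?I - {i}) n" using j by (auto simp: box_def multi_idx_def)
    then show "(\<Sum>k\<in>box (?I - {i}) n. if k = j(i:=0) then M (j i) c * S (j(i:=c)) else 0) = M (j i) c * S (j(i:=c))"
      by (simp add: finite_box)
  qed
  finally show ?thesis .
qed

lemma act_idt:
  assumes "1 \<le> d" "j \<in> multi_idx d n"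
  shows "act d n (idt d n) S j = S j"
proof -
  have "act d n (idt d n) S = act d n (ins d n 1 (mident (n 1))) S"
    by (rule act_cong_g) (auto simp: idt_def ins_def)
  then have "act d n (idt d n) S j = (\<Sum>c<n 1. mident (n 1) (j 1) c * S (j(1:=c)))"
    using assms by (simp add: act_ins)
  also have "\<dots> = (\<Sum>c<n 1. if c = j 1 then S j else 0)"
    by (rule sum.cong) (auto simp: mident_def)
  also have "\<dots> = S j" using assms by (simp add: multi_lt)
  finally show ?thesis .
qed

lemma act_sum: "finite X \<Longrightarrow> act d n g (\<lambda>j. \<Sum>x\<in>X. F x j) j' = (\<Sum>x\<in>X. act d n g (F x) j')"
  by (simp add: act_def sum_distrib_left sum_distrib_right sum.swap[of _ X] mult_ac)

lemma act_zero: "act d n g (\<lambda>_. 0) = (\<lambda>_. 0)" by (simp add: act_def fun_eq_iff)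

lemma act_scale: "act d n g (\<lambda>j. c * S j) j' = c * act d n g S j'"
  by (simp add: act_def sum_distrib_left mult_ac)

definition Dop :: "nat \<Rightarrow> (nat \<Rightarrow> nat) \<Rightarrow> tup \<Rightarrow> tensor \<Rightarrow> tensor" where
  "Dop d n Z S = (\<lambda>j. \<Sum>i\<in>{1..d}. act d n (ins d n i (Z i)) S j)"

lemma Dop_in: "j \<in> multi_idx d n \<Longrightarrow> Dop d n Z S j = (\<Sum>i\<in>{1..d}. \<Sum>c<n i. Z i (j i) c * S (j(i:=c)))"
  by (simp add: Dop_def act_ins)
lemma Dop_out: "j \<notin> multi_idx d n \<Longrightarrow> Dop d n Z S j = 0"
  by (simp add: Dop_def act_out)


locale mpsset =
  fixes d :: nat and n s :: "nat \<Rightarrow> nat"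
  assumes d3: "d \<ge> 3"
    and n2: "\<forall>i\<in>{1..d}. n i \<ge> 2"
    and spos: "\<forall>i\<in>{1..d-1}. s i > 0"
    and s0: "s 0 = 1" and sd: "s d = 1"
    and sle: "\<forall>i\<in>{1..d}. s (i - 1) * s i \<le> n i"
begin

abbreviation "A \<equiv> alpha_set d s"
abbreviation "T \<equiv> T_mps d s"
abbreviation "mps \<equiv> mps_index d s"
abbreviation "M \<equiv> multi_idx d n"

lemma spos_all: "i \<le> d \<Longrightarrow> s i > 0"
  using spos s0 sd by (cases "i = 0"; cases "i = d") auto

lemma alpha_lt: "\<alpha> \<in> A \<Longrightarrow> i \<le> d \<Longrightarrow> \<alpha> i < s i"
proof -
  assume a: "\<alpha> \<in> A" and i: "i \<le> d"
  show ?thesis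
  proof (cases "i \<in> {1..d-1}")
    case True then show ?thesis using a by (simp add: alpha_set_def)
  next
    case False then have "\<alpha> i = 0" using a by (simp add: alpha_set_def)
    then show ?thesis using spos_all[OF i] by simp
  qed
qed

lemma alpha_out: "\<alpha> \<in> A \<Longrightarrow> i \<notin> {1..d-1} \<Longrightarrow> \<alpha> i = 0"
  by (simp add: alpha_set_def)

lemma mps_formula: "\<alpha> \<in> A \<Longrightarrow> i \<in> {1..d} \<Longrightarrow> mps \<alpha> i = \<alpha> (i - 1) * s i + \<alpha> i"
proof -
  assume a: "\<alpha> \<in> A" and i: "i \<in> {1..d}"
  have a0: "\<alpha> 0 = 0" "\<alpha> d = 0" using a d3 by (auto simp: alpha_set_def)
  show ?thesis
  proof (cases "i = 1")
    case True then show ?thesis using a0 by (simp add: mps_index_def)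
  next
    case False
    show ?thesis
    proof (cases "i = d")
      case True then show ?thesis using a0 False sd by (simp add: mps_index_def)
    next
      case False2: False
      then have "2 \<le> i \<and> i \<le> d - 1" using i False by auto
      then show ?thesis using False False2 by (simp add: mps_index_def iota_def)
    qed
  qed
qed

lemma mps_outside: "i \<notin> {1..d} \<Longrightarrow> mps \<alpha> i = 0"
  using d3 by (auto simp: mps_index_def)

lemma mps_lt: "\<alpha> \<in> A \<Longrightarrow> i \<in> {1..d} \<Longrightarrow> mps \<alpha> i < s (i - 1) * s i"
proof -
  assume a: "\<alpha> \<in> A" and i: "i \<in> {1..d}"
  have "\<alpha> (i - 1) < s (i - 1)" using i by (intro alpha_lt[OF a]) auto
  then have 1: "\<alpha> (i - 1) + 1 \<le> s (i - 1)" by simp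
  have 2: "\<alpha> i < s i" using i by (intro alpha_lt[OF a]) auto
  have "\<alpha> (i - 1) * s i + \<alpha> i < (\<alpha> (i - 1) + 1) * s i" using 2 by simp
  also have "\<dots> \<le> s (i - 1) * s i" using 1 by (rule mult_right_mono) simp
  finally show ?thesis using mps_formula[OF a i] by simp
qed

lemma mps_multi: "\<alpha> \<in> A \<Longrightarrow> mps \<alpha> \<in> M"
proof -
  assume a: "\<alpha> \<in> A"
  have "mps \<alpha> i < n i" if "i \<in> {1..d}" for i
    using mps_lt[OF a that] sle that by (meson less_le_trans)
  then show ?thesis using mps_outside by (simp add: multi_idx_def)
qed

lemma mps_det:
  assumes a: "\<alpha> \<in> A" and b: "\<beta> \<in> A" and i: "i \<in> {1..d}"
    and agree: "\<And>m. m \<in> {1..d} \<Longrightarrow> m \<noteq> i \<Longrightarrow> mps \<alpha> m = mps \<beta> m"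
  shows "\<alpha> = \<beta>"
proof
  fix m show "\<alpha> m = \<beta> m"
  proof (cases "m \<in> {1..d-1}")
    case False then show ?thesis using a b by (simp add: alpha_out)
  next
    case True
    show ?thesis
    proof (cases "m = i")
      case False
      have mm: "m \<in> {1..d}" using True by auto
      have "mps \<alpha> m mod s m = \<alpha> m" using mps_formula[OF a mm] alpha_lt[OF a, of m] True by auto
      moreover have "mps \<beta> m mod s m = \<beta> m" using mps_formula[OF b mm] alpha_lt[OF b, of m] True by auto
      ultimately show ?thesis using agree[OF mm False] by simp
    next
      case True2: True
      have mm: "m + 1 \<in> {1..d}" using True by auto
      have ne: "m + 1 \<noteq> i" using True2 by simp
      have sp: "s (m + 1) > 0" using spos_all[of "m+1"] True by auto
      have "mps \<alpha> (m + 1) div s (m + 1) = \<alpha> m"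
        using mps_formula[OF a mm] alpha_lt[OF a, of "m+1"] True sp by auto
      moreover have "mps \<beta> (m + 1) div s (m + 1) = \<beta> m"
        using mps_formula[OF b mm] alpha_lt[OF b, of "m+1"] True sp by auto
      ultimately show ?thesis using agree[OF mm ne] by simp
    qed
  qed
qed

lemma mps_inj: "inj_on mps A"
proof (rule inj_onI)
  fix \<alpha> \<beta> assume "\<alpha> \<in> A" "\<beta> \<in> A" "mps \<alpha> = mps \<beta>"
  then show "\<alpha> = \<beta>" using d3 by (intro mps_det[of \<alpha> \<beta> 1]) auto
qed

lemma finite_A: "finite A" by (simp add: alpha_box finite_box)

lemma T_val: "T j = (if j \<in> mps ` A then 1 else 0)"
proof -
  have "T j = (\<Sum>\<alpha>\<in>A. (\<lambda>x. if x = j then 1 else 0) (mps \<alpha>))"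
    by (simp add: T_mps_def basis_tensor_def eq_commute)
  also have "\<dots> = (\<Sum>x\<in>mps ` A. if x = j then 1 else 0)"
    by (rule sum.reindex[OF mps_inj, symmetric, unfolded comp_def])
  also have "\<dots> = (if j \<in> mps ` A then 1 else 0)"
    using finite_A by (simp add: sum.delta')
  finally show ?thesis .
qed

lemma T_big: "i \<in> {1..d} \<Longrightarrow> j i \<ge> s (i - 1) * s i \<Longrightarrow> T j = 0"
  unfolding T_val using mps_lt by (auto simp: not_less[symmetric])

lemma T_out: "j \<notin> M \<Longrightarrow> T j = 0"
  unfolding T_val using mps_multi by auto

lemma T_slice:
  assumes a: "\<alpha> \<in> A" and i: "i \<in> {1..d}"
  shows "T ((mps \<alpha>)(i := c)) = (if c = mps \<alpha> i then 1 else 0)"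
proof (cases "(mps \<alpha>)(i := c) \<in> mps ` A")
  case True
  then obtain \<beta> where b: "\<beta> \<in> A" and eq: "(mps \<alpha>)(i := c) = mps \<beta>" by auto
  have "\<alpha> = \<beta>"
  proof (rule mps_det[OF a b i])
    fix m assume "m \<in> {1..d}" "m \<noteq> i"
    then show "mps \<alpha> m = mps \<beta> m" using fun_cong[OF eq, of m] by simp
  qed
  then have "c = mps \<alpha> i" using fun_cong[OF eq, of i] by simp
  then show ?thesis using True by (simp add: T_val)
next
  case False
  then have "c \<noteq> mps \<alpha> i" using a by (metis fun_upd_triv image_eqI)
  then show ?thesis using False by (simp add: T_val)
qed

lemma zero_A: "(\<lambda>_. 0) \<in> A" using spos by (simp add: alpha_set_def)

lemma mps_zero: "mps (\<lambda>_. 0) = (\<lambda>_. 0)"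
  by (auto simp: mps_index_def iota_def fun_eq_iff)

lemma T_zero_slice: "i \<in> {1..d} \<Longrightarrow> T ((\<lambda>_. 0)(i := c)) = (if c = 0 then 1 else 0)"
  using T_slice[OF zero_A, of i c] by (simp add: mps_zero)

end


definition Kset :: "nat \<Rightarrow> (nat \<Rightarrow> nat) \<Rightarrow> tensor \<Rightarrow> tup set" where
  "Kset d n S = {Z \<in> gl_alg d n. \<forall>j. Dop d n Z S j = 0}"

lemma gexp_i: "i \<in> {1..d} \<Longrightarrow> gexp d n (gscale t Z) i = mexp (n i) (sc t (Z i))"
  by (simp add: gexp_def gscale_def sc_def)

lemma gl_alg_supp: "Z \<in> gl_alg d n \<Longrightarrow> i \<in> {1..d} \<Longrightarrow> msupp (n i) (Z i)"
  by (simp add: gl_alg_def msupp_def)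

lemma tmul_G_ins:
  assumes Z: "Z \<in> gl_alg d n" and i: "i \<in> {1..d}"
  shows "(\<Prod>m\<in>{1..d}. tmul d n (gexp d n (gscale t Z)) (ins d n i (Z i)) m (j m) (k m))
       = mmul (n i) (mexp (n i) (sc t (Z i))) (Z i) (j i) (k i) * (\<Prod>m\<in>{1..d} - {i}. mexp (n m) (sc t (Z m)) (j m) (k m))"
proof -
  have "(\<Prod>m\<in>{1..d}. tmul d n (gexp d n (gscale t Z)) (ins d n i (Z i)) m (j m) (k m))
      = tmul d n (gexp d n (gscale t Z)) (ins d n i (Z i)) i (j i) (k i) * (\<Prod>m\<in>{1..d} - {i}. tmul d n (gexp d n (gscale t Z)) (ins d n i (Z i)) m (j m) (k m))"
    by (rule prod.remove) (use i in auto)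
  also have "(\<Prod>m\<in>{1..d} - {i}. tmul d n (gexp d n (gscale t Z)) (ins d n i (Z i)) m (j m) (k m))
      = (\<Prod>m\<in>{1..d} - {i}. mexp (n m) (sc t (Z m)) (j m) (k m))"
    by (rule prod.cong) (auto simp: tmul_def ins_def gexp_i mmul_ident_right mexp_supp)
  finally show ?thesis using i by (simp add: tmul_def ins_def gexp_i)
qed

lemma deriv_act:
  assumes Z: "Z \<in> gl_alg d n"
  shows "DERIV (\<lambda>t. act d n (gexp d n (gscale t Z)) S j) t0 :>
           (\<Sum>i\<in>{1..d}. act d n (tmul d n (gexp d n (gscale t0 Z)) (ins d n i (Z i))) S j)"
proof (cases "j \<in> multi_idx d n")
  case False
  then show ?thesis by (simp add: act_out)
next
  case True
  let ?M = "multi_idx d n" and ?I = "{1..d}"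
  let ?phi = "\<lambda>m k t. mexp (n m) (sc t (Z m)) (j m) (k m)"
  have f: "act d n (gexp d n (gscale t Z)) S j = (\<Sum>k\<in>?M. (\<Prod>m\<in>?I. ?phi m k t) * S k)" for t
  proof -
    have "(\<Prod>m\<in>?I. gexp d n (gscale t Z) m (j m) (k m)) = (\<Prod>m\<in>?I. ?phi m k t)" for k
      by (rule prod.cong) (auto simp: gexp_i)
    then show ?thesis using True by (simp add: act_in)
  qed
  have "DERIV (\<lambda>t. \<Sum>k\<in>?M. (\<Prod>m\<in>?I. ?phi m k t) * S k) t0 :>
          (\<Sum>k\<in>?M. (\<Sum>i\<in>?I. mmul (n i) (mexp (n i) (sc t0 (Z i))) (Z i) (j i) (k i) * (\<Prod>m\<in>?I - {i}. ?phi m k t0)) * S k)"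
    by (intro DERIV_sum DERIV_cmult_right has_field_derivative_prod mexp_deriv)
  also have "(\<Sum>k\<in>?M. (\<Sum>i\<in>?I. mmul (n i) (mexp (n i) (sc t0 (Z i))) (Z i) (j i) (k i) * (\<Prod>m\<in>?I - {i}. ?phi m k t0)) * S k)
      = (\<Sum>k\<in>?M. \<Sum>i\<in>?I. (\<Prod>m\<in>?I. tmul d n (gexp d n (gscale t0 Z)) (ins d n i (Z i)) m (j m) (k m)) * S k)"
  proof (rule sum.cong[OF refl])
    fix k assume "k \<in> ?M"
    show "(\<Sum>i\<in>?I. mmul (n i) (mexp (n i) (sc t0 (Z i))) (Z i) (j i) (k i) * (\<Prod>m\<in>?I - {i}. ?phi m k t0)) * S k
        = (\<Sum>i\<in>?I. (\<Prod>m\<in>?I. tmul d n (gexp d n (gscale t0 Z)) (ins d n i (Z i)) m (j m) (k m)) * S k)"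
      unfolding sum_distrib_right
    proof (rule sum.cong[OF refl])
      fix i assume i: "i \<in> ?I"
      show "mmul (n i) (mexp (n i) (sc t0 (Z i))) (Z i) (j i) (k i) * (\<Prod>m\<in>?I - {i}. ?phi m k t0) * S k
          = (\<Prod>m\<in>?I. tmul d n (gexp d n (gscale t0 Z)) (ins d n i (Z i)) m (j m) (k m)) * S k"
        using tmul_G_ins[OF Z i, of t0 j k] by simp
    qed
  qed
  also have "\<dots> = (\<Sum>i\<in>?I. act d n (tmul d n (gexp d n (gscale t0 Z)) (ins d n i (Z i))) S j)"
    using True by (simp add: act_in sum.swap[of _ ?M])
  finally show ?thesis unfolding f .
qed

lemma G_zero_ins:
  assumes Z: "Z \<in> gl_alg d n"
  shows "act d n (tmul d n (gexp d n (gscale 0 Z)) (ins d n i (Z i))) S = act d n (ins d n i (Z i)) S"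
  by (rule act_cong_g) (auto simp: tmul_def ins_def gexp_i mexp_zero mmul_ident_left mident_supp gl_alg_supp[OF Z])

lemma lie_sub_K:
  assumes Z: "Z \<in> lie_alg d n (stab d n S)"
  shows "Z \<in> Kset d n S"
proof -
  have Zg: "Z \<in> gl_alg d n" using Z by (simp add: lie_alg_def)
  have c: "act d n (gexp d n (gscale t Z)) S = S" for t
    using Z by (simp add: lie_alg_def stab_def)
  have "Dop d n Z S j = 0" for j
  proof -
    have "DERIV (\<lambda>t. act d n (gexp d n (gscale t Z)) S j) 0 :> Dop d n Z S j"
      using deriv_act[OF Zg, of S j 0] by (simp add: G_zero_ins[OF Zg] Dop_def)
    moreover have "DERIV (\<lambda>t. act d n (gexp d n (gscale t Z)) S j) 0 :> 0"
      unfolding c by simp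
    ultimately show ?thesis by (rule DERIV_unique)
  qed
  then show ?thesis using Zg by (simp add: Kset_def)
qed

lemma G_GL:
  assumes Z: "Z \<in> gl_alg d n"
  shows "gexp d n (gscale t Z) \<in> GL_grp d n"
proof -
  have "gexp d n (gscale t Z) \<in> gl_alg d n"
    unfolding gl_alg_def
  proof (intro CollectI allI impI)
    fix i a b assume h: "i \<notin> {1..d} \<or> n i \<le> a \<or> n i \<le> b"
    show "gexp d n (gscale t Z) i a b = 0"
    proof (cases "i \<in> {1..d}")
      case True then show ?thesis using h mexp_supp[of "n i" "sc t (Z i)"] unfolding msupp_def by (auto simp: gexp_i)
    qed (auto simp add: gexp_def)
  qed
  moreover have "\<exists>B. (\<forall>a b. (a \<ge> n i \<or> b \<ge> n i) \<longrightarrow> B a b = 0)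
      \<and> mmul (n i) (gexp d n (gscale t Z) i) B = mident (n i) \<and> mmul (n i) B (gexp d n (gscale t Z) i) = mident (n i)"
    if i: "i \<in> {1..d}" for i
  proof (intro exI conjI)
    show "\<forall>a b. (a \<ge> n i \<or> b \<ge> n i) \<longrightarrow> mexp (n i) (sc (-t) (Z i)) a b = 0"
      using mexp_supp by (simp add: msupp_def)
    show "mmul (n i) (gexp d n (gscale t Z) i) (mexp (n i) (sc (-t) (Z i))) = mident (n i)"
      using i by (simp add: gexp_i mexp_inv)
    show "mmul (n i) (mexp (n i) (sc (-t) (Z i))) (gexp d n (gscale t Z) i) = mident (n i)"
      using i mexp_inv[of "n i" "-t" "Z i"] by (simp add: gexp_i)
  qed
  ultimately show ?thesis by (simp add: GL_grp_def)
qed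

lemma K_sub_lie:
  assumes Z: "Z \<in> Kset d n S" and d1: "1 \<le> d" and Ssupp: "\<And>j. j \<notin> multi_idx d n \<Longrightarrow> S j = 0"
  shows "Z \<in> lie_alg d n (stab d n S)"
proof -
  have Zg: "Z \<in> gl_alg d n" and DZ: "\<And>j. Dop d n Z S j = 0" using Z by (auto simp: Kset_def)
  have "act d n (gexp d n (gscale t Z)) S = S" for t
  proof
    fix j
    let ?F = "\<lambda>u. act d n (gexp d n (gscale u Z)) S j"
    have d: "DERIV ?F u :> 0" for u
    proof -
      have "(\<Sum>i\<in>{1..d}. act d n (tmul d n (gexp d n (gscale u Z)) (ins d n i (Z i))) S j)
          = (\<Sum>i\<in>{1..d}. act d n (gexp d n (gscale u Z)) (act d n (ins d n i (Z i)) S) j)"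
        by (simp add: act_comp)
      also have "\<dots> = act d n (gexp d n (gscale u Z)) (\<lambda>j'. \<Sum>i\<in>{1..d}. act d n (ins d n i (Z i)) S j') j"
        by (simp add: act_sum)
      also have "\<dots> = act d n (gexp d n (gscale u Z)) (\<lambda>_. 0) j"
        using DZ by (simp add: Dop_def)
      also have "\<dots> = 0" by (simp add: act_zero)
      finally show ?thesis using deriv_act[OF Zg, of S j u] by simp
    qed
    have "?F t = ?F 0" by (rule DERIV_isconst_all) (use d in blast)
    also have "\<dots> = act d n (idt d n) S j"
      by (rule fun_cong[OF act_cong_g]) (auto simp: gexp_i mexp_zero idt_def)
    also have "\<dots> = S j"
      by (cases "j \<in> multi_idx d n") (auto simp: act_idt[OF d1] act_out Ssupp)
    finally show "?F t = S j" .
  qed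
  then show ?thesis using Zg G_GL[OF Zg] by (simp add: lie_alg_def stab_def)
qed

lemma lie_eq_K:
  assumes "1 \<le> d" "\<And>j. j \<notin> multi_idx d n \<Longrightarrow> S j = 0"
  shows "lie_alg d n (stab d n S) = Kset d n S"
proof (intro set_eqI iffI)
  fix Z assume "Z \<in> lie_alg d n (stab d n S)" then show "Z \<in> Kset d n S" by (rule lie_sub_K)
next
  fix Z assume "Z \<in> Kset d n S" then show "Z \<in> lie_alg d n (stab d n S)" using K_sub_lie assms by blast
qed


lemma ginner_add_left: "ginner d n (\<lambda>i a b. X i a b + Y i a b) W = ginner d n X W + ginner d n Y W"
  by (simp add: ginner_def algebra_simps sum.distrib)
lemma ginner_sub_left: "ginner d n (\<lambda>i a b. X i a b - Y i a b) W = ginner d n X W - ginner d n Y W"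
  by (simp add: ginner_def algebra_simps sum_subtractf)
lemma ginner_scale_left: "ginner d n (\<lambda>i a b. c * X i a b) W = c * ginner d n X W"
  by (simp add: ginner_def sum_distrib_left mult.assoc)
lemma ginner_sym: "ginner d n X Y = ginner d n Y X"
  by (simp add: ginner_def mult.commute)
lemma ginner_add_right: "ginner d n W (\<lambda>i a b. X i a b + Y i a b) = ginner d n W X + ginner d n W Y"
  using ginner_add_left[of d n X Y W] by (simp add: ginner_sym)
lemma ginner_sub_right: "ginner d n W (\<lambda>i a b. X i a b - Y i a b) = ginner d n W X - ginner d n W Y"
  using ginner_sub_left[of d n X Y W] by (simp add: ginner_sym)
lemma ginner_scale_right: "ginner d n W (\<lambda>i a b. c * X i a b) = c * ginner d n W X"
  using ginner_scale_left[of d n c X W] by (simp add: ginner_sym)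
lemma ginner_zero_right: "ginner d n W (\<lambda>i a b. 0) = 0"
  by (simp add: ginner_def)

lemma ginner_self_nonneg: "ginner d n Z Z \<ge> 0"
  by (simp add: ginner_def sum_nonneg)

lemma ginner_self_zero:
  assumes Z: "Z \<in> gl_alg d n" and z: "ginner d n Z Z = 0"
  shows "Z = (\<lambda>i a b. 0)"
proof (intro ext)
  fix i a b show "Z i a b = 0"
  proof (cases "i \<in> {1..d} \<and> a < n i \<and> b < n i")
    case True
    have "\<forall>i\<in>{1..d}. (\<Sum>a<n i. \<Sum>b<n i. Z i a b * Z i a b) = 0"
      using z unfolding ginner_def by (subst sum_nonneg_eq_0_iff[symmetric]) (auto intro!: sum_nonneg)
    then have "(\<Sum>a<n i. \<Sum>b<n i. Z i a b * Z i a b) = 0" using True by blast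
    then have "\<forall>a<n i. (\<Sum>b<n i. Z i a b * Z i a b) = 0"
      by (subst (asm) sum_nonneg_eq_0_iff) (auto intro!: sum_nonneg)
    then have "(\<Sum>b<n i. Z i a b * Z i a b) = 0" using True by blast
    then have "\<forall>b<n i. Z i a b * Z i a b = 0"
      by (subst (asm) sum_nonneg_eq_0_iff) auto
    then show ?thesis using True by simp
  next
    case False then show ?thesis using Z by (auto simp: gl_alg_def)
  qed
qed

definition vo :: "(nat \<times> nat \<times> nat) set \<Rightarrow> tup \<Rightarrow> bool" where
  "vo F Z \<longleftrightarrow> (\<forall>i a b. (i, a, b) \<notin> F \<longrightarrow> Z i a b = 0)"

lemma lin_sub_zero: "lin_subspace d n W \<Longrightarrow> (\<lambda>i a b. 0) \<in> W" by (simp add: lin_subspace_def)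
lemma lin_sub_add: "lin_subspace d n W \<Longrightarrow> X \<in> W \<Longrightarrow> Y \<in> W \<Longrightarrow> (\<lambda>i a b. X i a b + Y i a b) \<in> W"
  unfolding lin_subspace_def gadd_def by blast
lemma lin_sub_scale: "lin_subspace d n W \<Longrightarrow> X \<in> W \<Longrightarrow> (\<lambda>i a b. c * X i a b) \<in> W"
  unfolding lin_subspace_def gscale_def by blast
lemma lin_sub_sub: "lin_subspace d n W \<Longrightarrow> X \<in> W \<Longrightarrow> Y \<in> W \<Longrightarrow> (\<lambda>i a b. X i a b - Y i a b) \<in> W"
proof -
  assume W: "lin_subspace d n W" and X: "X \<in> W" and Y: "Y \<in> W"
  have "(\<lambda>i a b. (-1) * Y i a b) \<in> W" by (rule lin_sub_scale[OF W Y])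
  from lin_sub_add[OF W X this] show ?thesis by simp
qed
lemma lin_sub_gl: "lin_subspace d n W \<Longrightarrow> X \<in> W \<Longrightarrow> X \<in> gl_alg d n"
  unfolding lin_subspace_def by blast

lemma proj_gen:
  assumes "finite F"
  shows "\<forall>W. lin_subspace d n W \<and> (\<forall>w\<in>W. vo F w) \<longrightarrow>
           (\<forall>X. \<exists>y\<in>W. \<forall>w\<in>W. ginner d n (\<lambda>i a b. X i a b - y i a b) w = 0)"
  using assms
proof (induction F rule: finite_induct)
  case empty
  show ?case
  proof (intro allI impI)
    fix W X assume h: "lin_subspace d n W \<and> (\<forall>w\<in>W. vo {} w)"
    have z: "w = (\<lambda>i a b. 0)" if "w \<in> W" for w
      using h that unfolding vo_def by (intro ext) blast
    show "\<exists>y\<in>W. \<forall>w\<in>W. ginner d n (\<lambda>i a b. X i a b - y i a b) w = 0"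
    proof (rule bexI[OF _ lin_sub_zero])
      show "\<forall>w\<in>W. ginner d n (\<lambda>i a b. X i a b - 0) w = 0"
      proof
        fix w assume "w \<in> W"
        then show "ginner d n (\<lambda>i a b. X i a b - 0) w = 0" using z ginner_zero_right by metis
      qed
    qed (use h in blast)
  qed
next
  case (insert x F)
  show ?case
  proof (intro allI impI)
    fix W X assume h: "lin_subspace d n W \<and> (\<forall>w\<in>W. vo (insert x F) w)"
    have W: "lin_subspace d n W" using h by blast
    define W0 where "W0 = {w \<in> W. vo F w}"
    have W0: "lin_subspace d n W0"
      using W unfolding W0_def lin_subspace_def gadd_def gscale_def vo_def by auto
    have W0sub: "W0 \<subseteq> W" by (auto simp: W0_def)
    have IH: "\<forall>X. \<exists>y\<in>W0. \<forall>w\<in>W0. ginner d n (\<lambda>i a b. X i a b - y i a b) w = 0"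
      using insert.IH W0 by (auto simp: W0_def)
    define Q where "Q X y \<longleftrightarrow> y \<in> W0 \<and> (\<forall>w\<in>W0. ginner d n (\<lambda>i a b. X i a b - y i a b) w = 0)" for X y
    define p0 where "p0 X = (SOME y. Q X y)" for X
    have "Q X (p0 X)" for X
    proof -
      have "\<exists>y. Q X y" using IH unfolding Q_def by blast
      then show ?thesis unfolding p0_def by (rule someI_ex)
    qed
    then have p0: "p0 X \<in> W0 \<and> (\<forall>w\<in>W0. ginner d n (\<lambda>i a b. X i a b - p0 X i a b) w = 0)" for X
      unfolding Q_def by blast
    show "\<exists>y\<in>W. \<forall>w\<in>W. ginner d n (\<lambda>i a b. X i a b - y i a b) w = 0"
    proof (cases "\<forall>w\<in>W. vo F w")
      case True
      then have "W0 = W" by (auto simp: W0_def)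
      then show ?thesis using IH by simp
    next
      case False
      then obtain w1 where w1: "w1 \<in> W" "\<not> vo F w1" by blast
      obtain i0 a0 b0 where x: "x = (i0, a0, b0)" by (cases x) auto
      have w1x: "w1 i0 a0 b0 \<noteq> 0"
      proof -
        obtain i a b where nf: "(i, a, b) \<notin> F" and nz: "w1 i a b \<noteq> 0" using w1(2) unfolding vo_def by blast
        have "vo (insert x F) w1" using h w1(1) by blast
        then have "(i, a, b) \<in> insert x F" using nz unfolding vo_def by blast
        then have "(i, a, b) = x" using nf by blast
        then show ?thesis using nz x by simp
      qed
      define v where "v = (\<lambda>i a b. w1 i a b - p0 w1 i a b)"
      have vW: "v \<in> W" unfolding v_def using lin_sub_sub[OF W w1(1)] p0 W0sub by blast
      have vperp: "ginner d n v w = 0" if "w \<in> W0" for w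
        using p0[of w1] that unfolding v_def by blast
      have vv: "ginner d n v v \<noteq> 0"
      proof
        assume "ginner d n v v = 0"
        then have "v = (\<lambda>i a b. 0)" using ginner_self_zero lin_sub_gl[OF W vW] by blast
        then have "w1 = p0 w1" unfolding v_def by (auto simp: fun_eq_iff)
        moreover have "p0 w1 \<in> W0" using p0[of w1] by blast
        ultimately have "w1 \<in> W0" by simp
        then show False using w1 by (simp add: W0_def)
      qed
      define y0 where "y0 = p0 X"
      define c where "c = ginner d n (\<lambda>i a b. X i a b - y0 i a b) v / ginner d n v v"
      define y where "y = (\<lambda>i a b. y0 i a b + c * v i a b)"
      have y0W: "y0 \<in> W" using p0 W0sub unfolding y0_def by blast
      have yW: "y \<in> W" unfolding y_def by (rule lin_sub_add[OF W y0W lin_sub_scale[OF W vW]])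
      have Xy: "(\<lambda>i a b. X i a b - y i a b) = (\<lambda>i a b. (X i a b - y0 i a b) - c * v i a b)"
        by (simp add: y_def fun_eq_iff algebra_simps)
      have split: "ginner d n (\<lambda>i a b. X i a b - y i a b) w = ginner d n (\<lambda>i a b. X i a b - y0 i a b) w - c * ginner d n v w" for w
        unfolding Xy using ginner_sub_left[of d n "\<lambda>i a b. X i a b - y0 i a b" "\<lambda>i a b. c * v i a b" w]
          ginner_scale_left[of d n c v w] by simp
      have perp0: "ginner d n (\<lambda>i a b. X i a b - y i a b) w = 0" if "w \<in> W0" for w
      proof -
        have "ginner d n (\<lambda>i a b. X i a b - y0 i a b) w = 0" using p0[of X] that unfolding y0_def by blast
        then show ?thesis unfolding split using vperp[OF that] by simp
      qed
      have perpv: "ginner d n (\<lambda>i a b. X i a b - y i a b) v = 0"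
        unfolding split c_def using vv by simp
      have perpw1: "ginner d n (\<lambda>i a b. X i a b - y i a b) w1 = 0"
      proof -
        have e: "w1 = (\<lambda>i a b. v i a b + p0 w1 i a b)" by (simp add: v_def)
        have "ginner d n (\<lambda>i a b. X i a b - y i a b) w1 = ginner d n (\<lambda>i a b. X i a b - y i a b) (\<lambda>i a b. v i a b + p0 w1 i a b)"
          by (subst e) (rule refl)
        then have "ginner d n (\<lambda>i a b. X i a b - y i a b) w1 = ginner d n (\<lambda>i a b. X i a b - y i a b) v + ginner d n (\<lambda>i a b. X i a b - y i a b) (p0 w1)"
          by (simp only: ginner_add_right)
        then show ?thesis using perpv perp0 p0[of w1] by simp
      qed
      show ?thesis
      proof (intro bexI[OF _ yW] ballI)
        fix w assume wW: "w \<in> W"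
        define l where "l = w i0 a0 b0 / w1 i0 a0 b0"
        define w2 where "w2 = (\<lambda>i a b. w i a b - l * w1 i a b)"
        have w2W: "w2 \<in> W" unfolding w2_def by (rule lin_sub_sub[OF W wW lin_sub_scale[OF W w1(1)]])
        have "vo F w2"
          unfolding vo_def
        proof (intro allI impI)
          fix i a b assume nf: "(i, a, b) \<notin> F"
          show "w2 i a b = 0"
          proof (cases "(i, a, b) = x")
            case True then show ?thesis using w1x x by (simp add: w2_def l_def)
          next
            case False
            then have "w i a b = 0" "w1 i a b = 0" using h wW w1(1) nf unfolding vo_def by auto
            then show ?thesis by (simp add: w2_def)
          qed
        qed
        then have w2W0: "w2 \<in> W0" using w2W by (simp add: W0_def)
        have e: "w = (\<lambda>i a b. w2 i a b + l * w1 i a b)" by (simp add: w2_def)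
        have "ginner d n (\<lambda>i a b. X i a b - y i a b) w = ginner d n (\<lambda>i a b. X i a b - y i a b) (\<lambda>i a b. w2 i a b + l * w1 i a b)"
          by (subst e) (rule refl)
        then have "ginner d n (\<lambda>i a b. X i a b - y i a b) w = ginner d n (\<lambda>i a b. X i a b - y i a b) w2 + l * ginner d n (\<lambda>i a b. X i a b - y i a b) w1"
          by (simp only: ginner_add_right ginner_scale_right)
        then show "ginner d n (\<lambda>i a b. X i a b - y i a b) w = 0" using perp0[OF w2W0] perpw1 by simp
      qed
    qed
  qed
qed

lemma proj_exists:
  assumes W: "lin_subspace d n W"
  shows "\<exists>y\<in>W. \<forall>w\<in>W. ginner d n (\<lambda>i a b. X i a b - y i a b) w = 0"
proof -
  let ?F = "Sigma {1..d} (\<lambda>i. {..<n i} \<times> {..<n i})"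
  have fin: "finite ?F" by auto
  have "\<forall>w\<in>W. vo ?F w"
    using W unfolding lin_subspace_def vo_def gl_alg_def by auto
  then show ?thesis using proj_gen[OF fin] W by blast
qed


definition vin :: "nat \<Rightarrow> (nat \<Rightarrow> nat) \<Rightarrow> tensor \<Rightarrow> tensor \<Rightarrow> real" where
  "vin d n S W = (\<Sum>j\<in>multi_idx d n. S j * W j)"

definition ttr :: "tup \<Rightarrow> tup" where "ttr g = (\<lambda>i a b. g i b a)"

lemma ttr_ttr[simp]: "ttr (ttr g) = g" by (simp add: ttr_def)

lemma act_adj: "vin d n (act d n g S) W = vin d n S (act d n (ttr g) W)"
proof -
  let ?M = "multi_idx d n"
  have "vin d n (act d n g S) W = (\<Sum>j\<in>?M. (\<Sum>k\<in>?M. (\<Prod>i\<in>{1..d}. g i (j i) (k i)) * S k) * W j)"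
    by (simp add: vin_def act_def)
  also have "\<dots> = (\<Sum>j\<in>?M. \<Sum>k\<in>?M. S k * ((\<Prod>i\<in>{1..d}. g i (j i) (k i)) * W j))"
    unfolding sum_distrib_right by (intro sum.cong refl) (simp add: mult_ac)
  also have "\<dots> = (\<Sum>k\<in>?M. \<Sum>j\<in>?M. S k * ((\<Prod>i\<in>{1..d}. g i (j i) (k i)) * W j))"
    by (rule sum.swap)
  also have "\<dots> = (\<Sum>k\<in>?M. S k * (\<Sum>j\<in>?M. (\<Prod>i\<in>{1..d}. ttr g i (k i) (j i)) * W j))"
    by (simp add: sum_distrib_left ttr_def)
  also have "\<dots> = vin d n S (act d n (ttr g) W)"
    by (simp add: vin_def act_def)
  finally show ?thesis .
qed

lemma vin_sum_left: "finite X \<Longrightarrow> vin d n (\<lambda>j. \<Sum>x\<in>X. F x j) W = (\<Sum>x\<in>X. vin d n (F x) W)"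
  by (simp add: vin_def sum_distrib_right sum.swap[of _ X])
lemma vin_sum_right: "finite X \<Longrightarrow> vin d n W (\<lambda>j. \<Sum>x\<in>X. F x j) = (\<Sum>x\<in>X. vin d n W (F x))"
  by (simp add: vin_def sum_distrib_left sum.swap[of _ X])

lemma ttr_ins: "ttr (ins d n i M) = ins d n i (\<lambda>a b. M b a)"
  by (auto simp: ttr_def ins_def mident_def fun_eq_iff)

lemma Dop_adj: "vin d n (Dop d n Z S) W = vin d n S (Dop d n (ttr Z) W)"
proof -
  have "vin d n (Dop d n Z S) W = (\<Sum>i\<in>{1..d}. vin d n (act d n (ins d n i (Z i)) S) W)"
    unfolding Dop_def by (rule vin_sum_left) simp
  also have "\<dots> = (\<Sum>i\<in>{1..d}. vin d n S (act d n (ins d n i (ttr Z i)) W))"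
    by (simp add: act_adj ttr_ins) (simp add: ttr_def)
  also have "\<dots> = vin d n S (Dop d n (ttr Z) W)"
    unfolding Dop_def by (rule vin_sum_right[symmetric]) simp
  finally show ?thesis .
qed

lemma vin_self_zero: "vin d n U U = 0 \<Longrightarrow> j \<in> multi_idx d n \<Longrightarrow> U j = 0"
  unfolding vin_def using finite_multi[of d n]
  by (subst (asm) sum_nonneg_eq_0_iff) auto

lemma act_ins_sub: "act d n (ins d n i (\<lambda>a b. A a b - B a b)) S j = act d n (ins d n i A) S j - act d n (ins d n i B) S j"
  if i: "i \<in> {1..d}"
proof (cases "j \<in> multi_idx d n")
  case True
  show ?thesis unfolding act_ins[OF True i] by (simp add: algebra_simps sum_subtractf)
qed (simp add: act_out)

definition tbr :: "nat \<Rightarrow> (nat \<Rightarrow> nat) \<Rightarrow> tup \<Rightarrow> tup \<Rightarrow> tup" where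
  "tbr d n Y Z = (\<lambda>i a b. mmul (n i) (Y i) (Z i) a b - mmul (n i) (Z i) (Y i) a b)"

lemma Dop_Dop: "Dop d n Y (Dop d n Z S) j = (\<Sum>i\<in>{1..d}. \<Sum>m\<in>{1..d}. act d n (tmul d n (ins d n i (Y i)) (ins d n m (Z m))) S j)"
  unfolding Dop_def by (simp add: act_sum act_comp)

lemma tmul_ins_comm:
  assumes "i \<noteq> m"
  shows "act d n (tmul d n (ins d n i A) (ins d n m B)) S = act d n (tmul d n (ins d n m B) (ins d n i A)) S"
  by (rule act_cong_g) (use assms in \<open>auto simp: tmul_def ins_def mmul_ident_left_gen mmul_ident_right_gen\<close>)

lemma tmul_ins_same:
  "act d n (tmul d n (ins d n i A) (ins d n i B)) S = act d n (ins d n i (mmul (n i) A B)) S"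
  by (rule act_cong_g) (auto simp: tmul_def ins_def mmul_ident_left_gen mmul_ident_right_gen)

lemma Dop_comm:
  "Dop d n Y (Dop d n Z S) j - Dop d n Z (Dop d n Y S) j = Dop d n (tbr d n Y Z) S j"
proof -
  let ?I = "{1..d}"
  let ?Q = "\<lambda>i m. act d n (tmul d n (ins d n i (Y i)) (ins d n m (Z m))) S j"
  let ?R = "\<lambda>i m. act d n (tmul d n (ins d n i (Z i)) (ins d n m (Y m))) S j"
  have "Dop d n Z (Dop d n Y S) j = (\<Sum>i\<in>?I. \<Sum>m\<in>?I. ?R i m)" by (rule Dop_Dop)
  also have "\<dots> = (\<Sum>m\<in>?I. \<Sum>i\<in>?I. ?R i m)" using sum.swap[of "\<lambda>i m. ?R i m" ?I ?I] by simp
  finally have R: "Dop d n Z (Dop d n Y S) j = (\<Sum>i\<in>?I. \<Sum>m\<in>?I. ?R m i)" .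
  have "Dop d n Y (Dop d n Z S) j - Dop d n Z (Dop d n Y S) j = (\<Sum>i\<in>?I. \<Sum>m\<in>?I. ?Q i m - ?R m i)"
  proof -
    have Q: "Dop d n Y (Dop d n Z S) j = (\<Sum>i\<in>?I. \<Sum>m\<in>?I. ?Q i m)" by (rule Dop_Dop)
    show ?thesis by (simp only: Q R sum_subtractf)
  qed
  also have "\<dots> = (\<Sum>i\<in>?I. \<Sum>m\<in>?I. if m = i then ?Q i i - ?R i i else 0)"
  proof (intro sum.cong refl)
    fix i m assume "i \<in> ?I" "m \<in> ?I"
    show "?Q i m - ?R m i = (if m = i then ?Q i i - ?R i i else 0)"
    proof (cases "m = i")
      case False
      then have "?Q i m = ?R m i" using tmul_ins_comm[of i m d n "Y i" "Z m" S] by simp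
      then show ?thesis using False by simp
    qed simp
  qed
  also have "\<dots> = (\<Sum>i\<in>?I. act d n (ins d n i (tbr d n Y Z i)) S j)"
  proof (intro sum.cong refl)
    fix i assume i: "i \<in> ?I"
    have "(\<Sum>m\<in>?I. if m = i then ?Q i i - ?R i i else 0) = ?Q i i - ?R i i" using i by simp
    also have "\<dots> = act d n (ins d n i (mmul (n i) (Y i) (Z i))) S j - act d n (ins d n i (mmul (n i) (Z i) (Y i))) S j"
      by (simp add: tmul_ins_same)
    also have "\<dots> = act d n (ins d n i (tbr d n Y Z i)) S j"
      unfolding tbr_def using act_ins_sub[OF i] by simp
    finally show "(\<Sum>m\<in>?I. if m = i then ?Q i i - ?R i i else 0) = act d n (ins d n i (tbr d n Y Z i)) S j" .
  qed
  also have "\<dots> = Dop d n (tbr d n Y Z) S j" by (simp add: Dop_def)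
  finally show ?thesis .
qed

lemma Dop_zero_S: "Dop d n Z (\<lambda>_. 0) = (\<lambda>_. 0)"
  by (simp add: Dop_def act_zero fun_eq_iff)

lemma Dop_cong: "(\<And>i. i \<in> {1..d} \<Longrightarrow> Z i = Z' i) \<Longrightarrow> Dop d n Z S = Dop d n Z' S"
  by (simp add: Dop_def)

lemma act_Dop_conj:
  assumes inv: "\<And>i. i \<in> {1..d} \<Longrightarrow> mmul (n i) (g' i) (g i) = mident (n i)"
  shows "act d n g (Dop d n X S) j = Dop d n (\<lambda>i. mmul (n i) (mmul (n i) (g i) (X i)) (g' i)) (act d n g S) j"
proof -
  have "act d n g (Dop d n X S) j = (\<Sum>i\<in>{1..d}. act d n (tmul d n g (ins d n i (X i))) S j)"
    unfolding Dop_def by (simp add: act_sum act_comp)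
  also have "\<dots> = (\<Sum>i\<in>{1..d}. act d n (tmul d n (ins d n i (mmul (n i) (mmul (n i) (g i) (X i)) (g' i))) g) S j)"
  proof (rule sum.cong[OF refl])
    fix i assume i: "i \<in> {1..d}"
    have "act d n (tmul d n g (ins d n i (X i))) S = act d n (tmul d n (ins d n i (mmul (n i) (mmul (n i) (g i) (X i)) (g' i))) g) S"
    proof (rule act_cong_g)
      fix m a b assume m: "m \<in> {1..d}" and ab: "a < n m" "b < n m"
      show "tmul d n g (ins d n i (X i)) m a b = tmul d n (ins d n i (mmul (n i) (mmul (n i) (g i) (X i)) (g' i))) g m a b"
      proof (cases "m = i")
        case True
        have "mmul (n i) (mmul (n i) (mmul (n i) (g i) (X i)) (g' i)) (g i) = mmul (n i) (mmul (n i) (g i) (X i)) (mident (n i))"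
          by (simp add: mmul_assoc inv[OF i])
        also have "\<dots> = mmul (n i) (g i) (X i)" by (simp add: mmul_ident_right mmul_supp)
        finally show ?thesis using True m by (simp add: tmul_def ins_def)
      next
        case False
        then show ?thesis using m ab by (simp add: tmul_def ins_def mmul_ident_left_gen mmul_ident_right_gen)
      qed
    qed
    then show "act d n (tmul d n g (ins d n i (X i))) S j = act d n (tmul d n (ins d n i (mmul (n i) (mmul (n i) (g i) (X i)) (g' i))) g) S j"
      by simp
  qed
  also have "\<dots> = Dop d n (\<lambda>i. mmul (n i) (mmul (n i) (g i) (X i)) (g' i)) (act d n g S) j"
    unfolding Dop_def by (simp add: act_comp)
  finally show ?thesis .
qed


lemma sum_shift_add: fixes w :: "nat \<Rightarrow> real" and m q :: nat
  shows "(\<Sum>c<m + q. w c) = (\<Sum>c<m. w c) + (\<Sum>b<q. w (m + b))"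
  by (induction q) (simp_all add: add.assoc)

lemma sum_pair: fixes w :: "nat \<Rightarrow> real" and p q :: nat
  shows "(\<Sum>a<p. \<Sum>b<q. w (a * q + b)) = (\<Sum>c<p * q. w c)"
proof (induction p)
  case (Suc p)
  have "(\<Sum>c<Suc p * q. w c) = (\<Sum>c<p * q + q. w c)" by (simp add: add.commute)
  also have "\<dots> = (\<Sum>c<p * q. w c) + (\<Sum>b<q. w (p * q + b))" by (rule sum_shift_add)
  finally show ?case using Suc by simp
qed simp

lemma sum_box_const: "(\<Sum>k\<in>box J s. (c::real)) = real (card (box J s)) * c"
  by simp

context mpsset begin

lemma T_supp: "j \<notin> M \<Longrightarrow> T j = 0" by (rule T_out)

lemma lie_K: "lie_alg d n (stab d n T) = Kset d n T"
  using d3 by (intro lie_eq_K) (auto intro: T_out)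

lemma count:
  assumes i: "i \<in> {1..d}"
  shows "\<exists>\<mu>. \<forall>w::nat \<Rightarrow> real. (\<Sum>\<alpha>\<in>A. w (\<alpha> (i - 1) * s i + \<alpha> i)) = \<mu> * (\<Sum>c<s (i - 1) * s i. w c)"
proof -
  let ?I = "{1..d-1}"
  have finI: "finite ?I" by simp
  show ?thesis
  proof (cases "i = 1")
    case True
    have 1: "1 \<in> ?I" using d3 by auto
    have "(\<Sum>\<alpha>\<in>A. w (\<alpha> (i - 1) * s i + \<alpha> i)) = real (card (box (?I - {1}) s)) * (\<Sum>c<s (i - 1) * s i. w c)" for w :: "nat \<Rightarrow> real"
    proof -
      have "(\<Sum>\<alpha>\<in>A. w (\<alpha> (i - 1) * s i + \<alpha> i)) = (\<Sum>c<s 1. \<Sum>k\<in>box (?I - {1}) s. w ((k(1:=c)) (1 - 1) * s 1 + (k(1:=c)) 1))"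
        unfolding alpha_box True by (rule sum_box_split[OF finI 1])
      also have "\<dots> = (\<Sum>c<s 1. \<Sum>k\<in>box (?I - {1}) s. w c)"
        by (intro sum.cong refl) (auto simp: box_def)
      also have "\<dots> = real (card (box (?I - {1}) s)) * (\<Sum>c<s 1. w c)"
        by (simp add: sum_distrib_left)
      finally show ?thesis using True s0 by simp
    qed
    then show ?thesis by blast
  next
    case False
    show ?thesis
    proof (cases "i = d")
      case True
      have dd: "d - 1 \<in> ?I" using d3 by auto
      have "(\<Sum>\<alpha>\<in>A. w (\<alpha> (i - 1) * s i + \<alpha> i)) = real (card (box (?I - {d - 1}) s)) * (\<Sum>c<s (i - 1) * s i. w c)" for w :: "nat \<Rightarrow> real"
      proof -
        have "(\<Sum>\<alpha>\<in>A. w (\<alpha> (i - 1) * s i + \<alpha> i)) = (\<Sum>c<s (d - 1). \<Sum>k\<in>box (?I - {d - 1}) s. w ((k(d-1:=c)) (d - 1) * s d + (k(d-1:=c)) d))"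
          unfolding alpha_box True by (rule sum_box_split[OF finI dd])
        also have "\<dots> = (\<Sum>c<s (d - 1). \<Sum>k\<in>box (?I - {d - 1}) s. w c)"
          using d3 sd by (intro sum.cong refl) (auto simp: box_def)
        also have "\<dots> = real (card (box (?I - {d - 1}) s)) * (\<Sum>c<s (d - 1). w c)"
          by (simp add: sum_distrib_left)
        finally show ?thesis using True sd by simp
      qed
      then show ?thesis by blast
    next
      case False2: False
      have i1: "i - 1 \<in> ?I" and i2: "i \<in> ?I - {i - 1}" using i False False2 by auto
      have fin2: "finite (?I - {i - 1})" by simp
      let ?J = "?I - {i - 1} - {i}"
      have "(\<Sum>\<alpha>\<in>A. w (\<alpha> (i - 1) * s i + \<alpha> i)) = real (card (box ?J s)) * (\<Sum>c<s (i - 1) * s i. w c)" for w :: "nat \<Rightarrow> real"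
      proof -
        have "(\<Sum>\<alpha>\<in>A. w (\<alpha> (i - 1) * s i + \<alpha> i)) = (\<Sum>a<s (i - 1). \<Sum>k\<in>box (?I - {i - 1}) s. w ((k(i-1:=a)) (i - 1) * s i + (k(i-1:=a)) i))"
          unfolding alpha_box by (rule sum_box_split[OF finI i1])
        also have "\<dots> = (\<Sum>a<s (i - 1). \<Sum>k\<in>box (?I - {i - 1}) s. w (a * s i + k i))"
          using i False by (intro sum.cong refl) auto
        also have "\<dots> = (\<Sum>a<s (i - 1). \<Sum>b<s i. \<Sum>k\<in>box ?J s. w (a * s i + (k(i:=b)) i))"
          by (intro sum.cong refl sum_box_split[OF fin2 i2])
        also have "\<dots> = (\<Sum>a<s (i - 1). \<Sum>b<s i. real (card (box ?J s)) * w (a * s i + b))"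
          by simp
        also have "\<dots> = real (card (box ?J s)) * (\<Sum>a<s (i - 1). \<Sum>b<s i. w (a * s i + b))"
          by (simp add: sum_distrib_left)
        also have "\<dots> = real (card (box ?J s)) * (\<Sum>c<s (i - 1) * s i. w c)"
          by (simp add: sum_pair)
        finally show ?thesis .
      qed
      then show ?thesis by blast
    qed
  qed
qed

lemma crit:
  assumes eq: "\<forall>i\<in>{1..d}. n i = s (i - 1) * s i" and i: "i \<in> {1..d}"
  shows "\<exists>\<mu>. \<forall>M0. vin d n T (act d n (ins d n i M0) T) = \<mu> * (\<Sum>c<n i. M0 c c)"
proof -
  obtain \<mu> where mu: "\<And>w::nat \<Rightarrow> real. (\<Sum>\<alpha>\<in>A. w (\<alpha> (i - 1) * s i + \<alpha> i)) = \<mu> * (\<Sum>c<s (i - 1) * s i. w c)"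
    using count[OF i] by blast
  have "vin d n T (act d n (ins d n i M0) T) = \<mu> * (\<Sum>c<n i. M0 c c)" for M0
  proof -
    let ?F = "\<lambda>j. \<Sum>c<n i. M0 (j i) c * T (j(i:=c))"
    have sub: "mps ` A \<subseteq> M" using mps_multi by auto
    have "vin d n T (act d n (ins d n i M0) T) = (\<Sum>j\<in>M. (if j \<in> mps ` A then ?F j else 0))"
      unfolding vin_def by (intro sum.cong refl) (simp add: act_ins[OF _ i] T_val)
    also have "\<dots> = (\<Sum>j\<in>M \<inter> mps ` A. ?F j)"
      by (rule sum.inter_restrict[OF finite_multi, symmetric])
    also have "M \<inter> mps ` A = mps ` A" using sub by blast
    also have "(\<Sum>j\<in>mps ` A. ?F j) = (\<Sum>\<alpha>\<in>A. ?F (mps \<alpha>))"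
      by (rule sum.reindex[OF mps_inj, unfolded comp_def])
    also have "\<dots> = (\<Sum>\<alpha>\<in>A. M0 (\<alpha> (i - 1) * s i + \<alpha> i) (\<alpha> (i - 1) * s i + \<alpha> i))"
    proof (intro sum.cong refl)
      fix \<alpha> assume a: "\<alpha> \<in> A"
      have lt: "mps \<alpha> i < n i" using mps_multi[OF a] i by (simp add: multi_lt)
      have "?F (mps \<alpha>) = (\<Sum>c<n i. if c = mps \<alpha> i then M0 (mps \<alpha> i) (mps \<alpha> i) else 0)"
        by (intro sum.cong refl) (simp add: T_slice[OF a i])
      also have "\<dots> = M0 (mps \<alpha> i) (mps \<alpha> i)" using lt by simp
      finally show "?F (mps \<alpha>) = M0 (\<alpha> (i - 1) * s i + \<alpha> i) (\<alpha> (i - 1) * s i + \<alpha> i)"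
        by (simp add: mps_formula[OF a i])
    qed
    also have "\<dots> = \<mu> * (\<Sum>c<n i. M0 c c)"
      using mu[of "\<lambda>c. M0 c c"] eq i by simp
    finally show ?thesis .
  qed
  then show ?thesis by blast
qed

lemma trace_comm_zero: "(\<Sum>c<m. mmul m Y (\<lambda>a b. Y b a) c c - mmul m (\<lambda>a b. Y b a) Y c c) = 0"
proof -
  have "(\<Sum>c<m. mmul m Y (\<lambda>a b. Y b a) c c) = (\<Sum>c<m. \<Sum>e<m. Y c e * Y c e)"
    by (simp add: mmul_in)
  also have "\<dots> = (\<Sum>e<m. \<Sum>c<m. Y c e * Y c e)" by (rule sum.swap)
  also have "\<dots> = (\<Sum>c<m. mmul m (\<lambda>a b. Y b a) Y c c)"
    by (simp add: mmul_in)
  finally show ?thesis by (simp add: sum_subtractf)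
qed

lemma transp:
  assumes eq: "\<forall>i\<in>{1..d}. n i = s (i - 1) * s i" and Y: "Y \<in> Kset d n T"
  shows "ttr Y \<in> Kset d n T"
proof -
  have Yg: "Y \<in> gl_alg d n" and DY: "\<And>j. Dop d n Y T j = 0" using Y by (auto simp: Kset_def)
  define U where "U = Dop d n (ttr Y) T"
  have DY0: "Dop d n Y T = (\<lambda>_. 0)" using DY by auto
  have "Dop d n Y U j = Dop d n (tbr d n Y (ttr Y)) T j" for j
  proof -
    have "Dop d n Y (Dop d n (ttr Y) T) j - Dop d n (ttr Y) (Dop d n Y T) j = Dop d n (tbr d n Y (ttr Y)) T j"
      by (rule Dop_comm)
    then show ?thesis unfolding U_def DY0 Dop_zero_S by simp
  qed
  then have DU: "Dop d n Y U = Dop d n (tbr d n Y (ttr Y)) T" by auto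
  have "vin d n U U = vin d n T (Dop d n Y U)"
    unfolding U_def using Dop_adj[of d n "ttr Y" T "Dop d n (ttr Y) T"] by simp
  also have "\<dots> = vin d n T (Dop d n (tbr d n Y (ttr Y)) T)" by (simp only: DU)
  also have "\<dots> = (\<Sum>i\<in>{1..d}. vin d n T (act d n (ins d n i (tbr d n Y (ttr Y) i)) T))"
    unfolding Dop_def by (rule vin_sum_right) simp
  also have "\<dots> = 0"
  proof (rule sum.neutral, rule ballI)
    fix i assume i: "i \<in> {1..d}"
    obtain \<mu> where mu: "\<And>M0. vin d n T (act d n (ins d n i M0) T) = \<mu> * (\<Sum>c<n i. M0 c c)"
      using crit[OF eq i] by blast
    show "vin d n T (act d n (ins d n i (tbr d n Y (ttr Y) i)) T) = 0"
      unfolding mu tbr_def ttr_def using trace_comm_zero[of "n i" "Y i"] by simp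
  qed
  finally have UU: "vin d n U U = 0" .
  have "\<forall>j. Dop d n (ttr Y) T j = 0"
  proof
    fix j show "Dop d n (ttr Y) T j = 0"
    proof (cases "j \<in> M")
      case True then show ?thesis using vin_self_zero[OF UU] by (simp add: U_def)
    qed (simp add: Dop_out)
  qed
  moreover have "ttr Y \<in> gl_alg d n" using Yg by (auto simp: gl_alg_def ttr_def)
  ultimately show ?thesis by (simp add: Kset_def)
qed

end


lemma Kset_lin: "lin_subspace d n (Kset d n S)"
  unfolding lin_subspace_def
proof (intro conjI ballI allI)
  show "Kset d n S \<subseteq> gl_alg d n" by (auto simp: Kset_def)
  show "(\<lambda>i a b. 0) \<in> Kset d n S"
  proof -
    have "Dop d n (\<lambda>i a b. 0) S j = 0" for j
      by (cases "j \<in> multi_idx d n") (simp_all add: Dop_in Dop_out)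
    then show ?thesis by (simp add: Kset_def gl_alg_def)
  qed
next
  fix X Y assume X: "X \<in> Kset d n S" and Y: "Y \<in> Kset d n S"
  have "Dop d n (gadd X Y) S j = Dop d n X S j + Dop d n Y S j" for j
    by (cases "j \<in> multi_idx d n") (simp_all add: Dop_in Dop_out gadd_def algebra_simps sum.distrib)
  then show "gadd X Y \<in> Kset d n S" using X Y by (simp add: Kset_def gl_alg_def gadd_def)
next
  fix X c assume X: "X \<in> Kset d n S"
  have "Dop d n (gscale c X) S j = c * Dop d n X S j" for j
    by (cases "j \<in> multi_idx d n") (simp_all add: Dop_in Dop_out gscale_def sum_distrib_left mult.assoc)
  then show "gscale c X \<in> Kset d n S" using X by (simp add: Kset_def gl_alg_def gscale_def)
qed

lemma orth_lin: "lin_subspace d n (orth_compl d n W)"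
  unfolding lin_subspace_def orth_compl_def
proof (intro conjI ballI allI)
  show "(\<lambda>i a b. 0) \<in> {Z \<in> gl_alg d n. \<forall>Y\<in>W. ginner d n Z Y = 0}"
    by (simp add: gl_alg_def ginner_def)
next
  fix X Y assume "X \<in> {Z \<in> gl_alg d n. \<forall>Y\<in>W. ginner d n Z Y = 0}" "Y \<in> {Z \<in> gl_alg d n. \<forall>Y\<in>W. ginner d n Z Y = 0}"
  then show "gadd X Y \<in> {Z \<in> gl_alg d n. \<forall>Y\<in>W. ginner d n Z Y = 0}"
    by (simp add: gadd_def ginner_add_left gl_alg_def)
next
  fix X c assume "X \<in> {Z \<in> gl_alg d n. \<forall>Y\<in>W. ginner d n Z Y = 0}"
  then show "gscale c X \<in> {Z \<in> gl_alg d n. \<forall>Y\<in>W. ginner d n Z Y = 0}"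
    by (simp add: gscale_def ginner_scale_left gl_alg_def)
qed auto

definition mtr :: "mat \<Rightarrow> mat" where "mtr A = (\<lambda>a b. A b a)"
definition tp :: "nat \<Rightarrow> mat \<Rightarrow> mat \<Rightarrow> real" where
  "tp m A B = (\<Sum>a<m. \<Sum>b<m. A a b * B a b)"

lemma tp_left: "tp m (mmul m A B) C = tp m B (mmul m (mtr A) C)"
proof -
  have "tp m (mmul m A B) C = (\<Sum>a<m. \<Sum>b<m. \<Sum>c<m. A a c * B c b * C a b)"
    by (simp add: tp_def mmul_in sum_distrib_right)
  also have "\<dots> = (\<Sum>a<m. \<Sum>c<m. \<Sum>b<m. A a c * B c b * C a b)"
    by (intro sum.cong refl sum.swap)
  also have "\<dots> = (\<Sum>c<m. \<Sum>a<m. \<Sum>b<m. A a c * B c b * C a b)"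
    by (rule sum.swap)
  also have "\<dots> = (\<Sum>c<m. \<Sum>b<m. \<Sum>a<m. A a c * B c b * C a b)"
    by (intro sum.cong refl sum.swap)
  also have "\<dots> = tp m B (mmul m (mtr A) C)"
    by (simp add: tp_def mmul_in mtr_def sum_distrib_left mult_ac)
  finally show ?thesis .
qed

lemma tp_right: "tp m (mmul m A B) C = tp m A (mmul m C (mtr B))"
proof -
  have "tp m (mmul m A B) C = (\<Sum>a<m. \<Sum>b<m. \<Sum>c<m. A a c * B c b * C a b)"
    by (simp add: tp_def mmul_in sum_distrib_right)
  also have "\<dots> = (\<Sum>a<m. \<Sum>c<m. \<Sum>b<m. A a c * B c b * C a b)"
    by (intro sum.cong refl sum.swap)
  also have "\<dots> = tp m A (mmul m C (mtr B))"
    by (simp add: tp_def mmul_in mtr_def sum_distrib_left mult_ac)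
  finally show ?thesis .
qed

lemma mtr_mmul: "mtr (mmul m A B) = mmul m (mtr B) (mtr A)"
  by (auto simp: mtr_def fun_eq_iff mmul_def mult.commute)

lemma ginner_tp: "ginner d n Z W = (\<Sum>i\<in>{1..d}. tp (n i) (Z i) (W i))"
  by (simp add: ginner_def tp_def)

definition hinv :: "nat \<Rightarrow> (nat \<Rightarrow> nat) \<Rightarrow> tup \<Rightarrow> tup" where
  "hinv d n h = (\<lambda>i. if i \<in> {1..d} then minv (n i) (h i) else (\<lambda>a b. 0))"

lemma minv_prop:
  assumes h: "h \<in> GL_grp d n" and i: "i \<in> {1..d}"
  shows "msupp (n i) (minv (n i) (h i)) \<and> mmul (n i) (h i) (minv (n i) (h i)) = mident (n i)
         \<and> mmul (n i) (minv (n i) (h i)) (h i) = mident (n i)"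
proof -
  have "\<exists>B. (\<forall>a b. (a \<ge> n i \<or> b \<ge> n i) \<longrightarrow> B a b = 0)
      \<and> mmul (n i) (h i) B = mident (n i) \<and> mmul (n i) B (h i) = mident (n i)"
    using h i by (simp add: GL_grp_def)
  then have "(\<forall>a b. (a \<ge> n i \<or> b \<ge> n i) \<longrightarrow> minv (n i) (h i) a b = 0)
      \<and> mmul (n i) (h i) (minv (n i) (h i)) = mident (n i) \<and> mmul (n i) (minv (n i) (h i)) (h i) = mident (n i)"
    unfolding minv_def by (rule someI_ex)
  then show ?thesis by (simp add: msupp_def)
qed

lemma minv_unique:
  assumes B: "msupp m B" and AB: "mmul m A B = mident m" and BA: "mmul m B A = mident m"
  shows "minv m A = B"
proof -
  have "\<exists>B. (\<forall>a b. (a \<ge> m \<or> b \<ge> m) \<longrightarrow> B a b = 0) \<and> mmul m A B = mident m \<and> mmul m B A = mident m"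
    using B AB BA by (auto simp: msupp_def)
  then have C: "(\<forall>a b. (a \<ge> m \<or> b \<ge> m) \<longrightarrow> minv m A a b = 0) \<and> mmul m A (minv m A) = mident m \<and> mmul m (minv m A) A = mident m"
    unfolding minv_def by (rule someI_ex)
  have Cs: "msupp m (minv m A)" using C by (simp add: msupp_def)
  have "minv m A = mmul m (minv m A) (mident m)" by (simp add: mmul_ident_right Cs)
  also have "\<dots> = mmul m (minv m A) (mmul m A B)" by (simp add: AB)
  also have "\<dots> = mmul m (mmul m (minv m A) A) B" by (simp add: mmul_assoc)
  also have "\<dots> = B" using C by (simp add: mmul_ident_left B)
  finally show ?thesis .
qed

context mpsset begin

lemma hinv_stab:
  assumes h: "h \<in> stab d n T"
  shows "hinv d n h \<in> stab d n T"
proof -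
  have hG: "h \<in> GL_grp d n" and hT: "act d n h T = T" using h by (auto simp: stab_def)
  have hg: "h \<in> gl_alg d n" using hG by (simp add: GL_grp_def)
  have "hinv d n h \<in> gl_alg d n"
    unfolding gl_alg_def
  proof (intro CollectI allI impI)
    fix i a b assume c: "i \<notin> {1..d} \<or> n i \<le> a \<or> n i \<le> b"
    show "hinv d n h i a b = 0"
    proof (cases "i \<in> {1..d}")
      case True then show ?thesis using c minv_prop[OF hG True] by (auto simp: hinv_def msupp_def)
    qed (auto simp add: hinv_def)
  qed
  moreover have "\<exists>B. (\<forall>a b. (a \<ge> n i \<or> b \<ge> n i) \<longrightarrow> B a b = 0)
      \<and> mmul (n i) (hinv d n h i) B = mident (n i) \<and> mmul (n i) B (hinv d n h i) = mident (n i)"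
    if i: "i \<in> {1..d}" for i
    using minv_prop[OF hG i] hg i by (intro exI[of _ "h i"]) (auto simp: hinv_def gl_alg_def)
  moreover have "act d n (hinv d n h) T = T"
  proof -
    have "act d n (hinv d n h) T = act d n (tmul d n (hinv d n h) h) T"
      by (subst hT[symmetric]) (simp add: act_comp)
    also have "\<dots> = act d n (idt d n) T"
      by (rule act_cong_g) (use minv_prop[OF hG] in \<open>auto simp: tmul_def hinv_def idt_def\<close>)
    also have "\<dots> = T"
    proof
      fix j show "act d n (idt d n) T j = T j"
        using d3 by (cases "j \<in> M") (auto simp: act_idt act_out T_out)
    qed
    finally show ?thesis .
  qed
  ultimately show ?thesis by (simp add: stab_def GL_grp_def)
qed

lemma invariance:
  assumes eq: "\<forall>i\<in>{1..d}. n i = s (i - 1) * s i"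
    and h: "h \<in> stab d n T" and Z: "Z \<in> orth_compl d n (Kset d n T)"
  shows "gconj d n h Z \<in> orth_compl d n (Kset d n T)"
proof -
  have hG: "h \<in> GL_grp d n" using h by (simp add: stab_def)
  have Zg: "Z \<in> gl_alg d n" and Zo: "\<And>Y. Y \<in> Kset d n T \<Longrightarrow> ginner d n Z Y = 0"
    using Z by (auto simp: orth_compl_def)
  have cg: "gconj d n h Z \<in> gl_alg d n"
    by (auto simp: gl_alg_def gconj_def mmul_out)
  have "ginner d n (gconj d n h Z) Y = 0" if Y: "Y \<in> Kset d n T" for Y
  proof -
    define W where "W = (\<lambda>i. if i \<in> {1..d} then mmul (n i) (mmul (n i) (hinv d n h i) (ttr Y i)) (h i) else (\<lambda>a b. 0))"
    have Wg: "W \<in> gl_alg d n" by (auto simp: W_def gl_alg_def mmul_out)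
    have "Dop d n W T j = 0" for j
    proof -
      have "Dop d n W T j = Dop d n (\<lambda>i. mmul (n i) (mmul (n i) (hinv d n h i) (ttr Y i)) (h i)) (act d n (hinv d n h) T) j"
        using hinv_stab[OF h] by (simp add: stab_def W_def Dop_def)
      also have "\<dots> = act d n (hinv d n h) (Dop d n (ttr Y) T) j"
        by (rule act_Dop_conj[symmetric]) (use minv_prop[OF hG] in \<open>simp add: hinv_def\<close>)
      also have "Dop d n (ttr Y) T = (\<lambda>_. 0)" using transp[OF eq Y] by (auto simp: Kset_def)
      finally show ?thesis by (simp add: act_zero)
    qed
    then have WK: "W \<in> Kset d n T" using Wg by (simp add: Kset_def)
    have "ginner d n (gconj d n h Z) Y = ginner d n Z (ttr W)"
      unfolding ginner_tp
    proof (rule sum.cong[OF refl])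
      fix i assume i: "i \<in> {1..d}"
      have "tp (n i) (gconj d n h Z i) (Y i) = tp (n i) (mmul (n i) (mmul (n i) (h i) (Z i)) (minv (n i) (h i))) (Y i)"
        using i by (simp add: gconj_def)
      also have "\<dots> = tp (n i) (mmul (n i) (h i) (Z i)) (mmul (n i) (Y i) (mtr (minv (n i) (h i))))"
        by (rule tp_right)
      also have "\<dots> = tp (n i) (Z i) (mmul (n i) (mtr (h i)) (mmul (n i) (Y i) (mtr (minv (n i) (h i)))))"
        by (rule tp_left)
      also have "mmul (n i) (mtr (h i)) (mmul (n i) (Y i) (mtr (minv (n i) (h i)))) = ttr W i"
      proof -
        have "ttr W i = mtr (W i)" by (simp add: ttr_def mtr_def)
        also have "\<dots> = mmul (n i) (mtr (h i)) (mmul (n i) (mtr (ttr Y i)) (mtr (minv (n i) (h i))))"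
          using i by (simp add: W_def hinv_def mtr_mmul)
        also have "mtr (ttr Y i) = Y i" by (simp add: mtr_def ttr_def)
        finally show ?thesis by simp
      qed
      finally show "tp (n i) (gconj d n h Z i) (Y i) = tp (n i) (Z i) (ttr W i)" .
    qed
    also have "\<dots> = 0" using Zo[OF transp[OF eq WK]] .
    finally show ?thesis .
  qed
  then show ?thesis using cg by (simp add: orth_compl_def)
qed

lemma reductive_if:
  assumes eq: "\<forall>i\<in>{1..d}. n i = s (i - 1) * s i"
  shows "reductive d n (stab d n T)"
  unfolding reductive_def lie_K
proof (intro exI conjI)
  let ?P = "orth_compl d n (Kset d n T)"
  show "lin_subspace d n ?P" by (rule orth_lin)
  show "?P \<inter> Kset d n T = {\<lambda>i a b. 0}"
  proof
    show "?P \<inter> Kset d n T \<subseteq> {\<lambda>i a b. 0}"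
    proof
      fix Z assume Z: "Z \<in> ?P \<inter> Kset d n T"
      then have "ginner d n Z Z = 0" "Z \<in> gl_alg d n" by (auto simp: orth_compl_def)
      then show "Z \<in> {\<lambda>i a b. 0}" using ginner_self_zero by blast
    qed
    show "{\<lambda>i a b. 0} \<subseteq> ?P \<inter> Kset d n T"
      using lin_sub_zero[OF orth_lin] lin_sub_zero[OF Kset_lin] by blast
  qed
  show "{gadd X Y |X Y. X \<in> ?P \<and> Y \<in> Kset d n T} = gl_alg d n"
  proof
    show "{gadd X Y |X Y. X \<in> ?P \<and> Y \<in> Kset d n T} \<subseteq> gl_alg d n"
    proof
      fix Z assume "Z \<in> {gadd X Y |X Y. X \<in> ?P \<and> Y \<in> Kset d n T}"
      then obtain X Y where Z: "Z = gadd X Y" and X: "X \<in> gl_alg d n" and Y: "Y \<in> gl_alg d n"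
        using lin_sub_gl[OF orth_lin] lin_sub_gl[OF Kset_lin] by blast
      show "Z \<in> gl_alg d n" using X Y unfolding Z gl_alg_def gadd_def by simp
    qed
    show "gl_alg d n \<subseteq> {gadd X Y |X Y. X \<in> ?P \<and> Y \<in> Kset d n T}"
    proof
      fix X assume X: "X \<in> gl_alg d n"
      obtain y where y: "y \<in> Kset d n T" and perp: "\<forall>w\<in>Kset d n T. ginner d n (\<lambda>i a b. X i a b - y i a b) w = 0"
        using proj_exists[OF Kset_lin] by blast
      have yg: "y \<in> gl_alg d n" using y by (simp add: Kset_def)
      have "(\<lambda>i a b. X i a b - y i a b) \<in> ?P"
        using X yg perp by (auto simp: orth_compl_def gl_alg_def)
      moreover have "X = gadd (\<lambda>i a b. X i a b - y i a b) y" by (simp add: gadd_def)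
      ultimately show "X \<in> {gadd X Y |X Y. X \<in> ?P \<and> Y \<in> Kset d n T}" using y by blast
    qed
  qed
  show "\<forall>h\<in>stab d n T. gconj d n h ` ?P \<subseteq> ?P"
    using invariance[OF eq] by blast
qed

end


definition Em :: "nat \<Rightarrow> mat" where "Em r = (\<lambda>a b. if a = 0 \<and> b = r then 1 else 0)"

lemma mm_IE_left:
  assumes "a < m" "b < m" "r < m"
  shows "mmul m (\<lambda>a b. mident m a b + c * Em r a b) B a b = B a b + c * (if a = 0 then B r b else 0)"
proof -
  have "mmul m (\<lambda>a b. mident m a b + c * Em r a b) B a b = (\<Sum>e<m. mident m a e * B e b) + c * (\<Sum>e<m. Em r a e * B e b)"
    using assms by (simp add: mmul_in algebra_simps sum.distrib sum_distrib_left)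
  also have "(\<Sum>e<m. mident m a e * B e b) = B a b"
    using fun_cong[OF fun_cong[OF mmul_ident_left_gen[of m B], of a], of b] assms by (simp add: mmul_in)
  also have "(\<Sum>e<m. Em r a e * B e b) = (\<Sum>e<m. if e = r then (if a = 0 then B r b else 0) else 0)"
    by (intro sum.cong refl) (auto simp: Em_def)
  also have "\<dots> = (if a = 0 then B r b else 0)" using assms by simp
  finally show ?thesis .
qed

lemma mm_IE_right:
  assumes "a < m" "b < m" "0 < m"
  shows "mmul m B (\<lambda>a b. mident m a b + c * Em r a b) a b = B a b + c * (if b = r then B a 0 else 0)"
proof -
  have "mmul m B (\<lambda>a b. mident m a b + c * Em r a b) a b = (\<Sum>e<m. B a e * mident m e b) + c * (\<Sum>e<m. B a e * Em r e b)"
    using assms by (simp add: mmul_in algebra_simps sum.distrib sum_distrib_left)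
  also have "(\<Sum>e<m. B a e * mident m e b) = B a b"
    using fun_cong[OF fun_cong[OF mmul_ident_right_gen[of m B], of a], of b] assms by (simp add: mmul_in)
  also have "(\<Sum>e<m. B a e * Em r e b) = (\<Sum>e<m. if e = 0 then (if b = r then B a 0 else 0) else 0)"
    by (intro sum.cong refl) (auto simp: Em_def)
  also have "\<dots> = (if b = r then B a 0 else 0)" using assms by simp
  finally show ?thesis .
qed

lemma IE_inv:
  assumes r: "0 < r" "r < m"
  shows "mmul m (\<lambda>a b. mident m a b + c * Em r a b) (\<lambda>a b. mident m a b + (- c) * Em r a b) = mident m"
proof (intro ext)
  fix a b
  show "mmul m (\<lambda>a b. mident m a b + c * Em r a b) (\<lambda>a b. mident m a b + (- c) * Em r a b) a b = mident m a b"
  proof (cases "a < m \<and> b < m")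
    case True
    let ?B = "\<lambda>a b. mident m a b + (- c) * Em r a b"
    have "mmul m (\<lambda>a b. mident m a b + c * Em r a b) ?B a b = ?B a b + c * (if a = 0 then ?B r b else 0)"
      using True r by (intro mm_IE_left) auto
    then show ?thesis using r True by (simp add: Em_def mident_def)
  qed (auto simp: mmul_out mident_def)
qed

lemma IE_supp: "r < m \<Longrightarrow> msupp m (\<lambda>a b. mident m a b + c * Em r a b)"
  by (auto simp: msupp_def mident_def Em_def)

context mpsset begin

lemma only_if:
  assumes red: "reductive d n (stab d n T)"
  shows "\<forall>i\<in>{1..d}. n i = s (i - 1) * s i"
proof (rule ccontr)
  assume "\<not> (\<forall>i\<in>{1..d}. n i = s (i - 1) * s i)"
  then obtain i where i: "i \<in> {1..d}" and ne: "n i \<noteq> s (i - 1) * s i" by blast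
  define r where "r = s (i - 1) * s i"
  have "s (i - 1) * s i \<le> n i" using sle i by blast
  then have rlt: "r < n i" using ne by (simp add: r_def)
  have rpos: "0 < r" using spos_all[of "i - 1"] spos_all[of i] i by (auto simp: r_def)
  have n0: "0 < n i" using rlt by simp
  obtain P where P: "lin_subspace d n P" and PK: "P \<inter> Kset d n T = {\<lambda>i a b. 0}"
    and sum: "{gadd X Y |X Y. X \<in> P \<and> Y \<in> Kset d n T} = gl_alg d n"
    and inv: "\<forall>h\<in>stab d n T. gconj d n h ` P \<subseteq> P"
    using red unfolding reductive_def lie_K by blast
  define X where "X = (\<lambda>m a (b::nat). if m = i \<and> a = r \<and> b = 0 then (1::real) else 0)"
  have Xg: "X \<in> gl_alg d n" using i rlt n0 by (auto simp: X_def gl_alg_def)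
  then obtain p y where p: "p \<in> P" and y: "y \<in> Kset d n T" and Xpy: "X = gadd p y"
    using sum by blast
  have pg: "p \<in> gl_alg d n" using P p by (rule lin_sub_gl)
  have yr: "y i r 0 = 0"
  proof -
    define j0 where "j0 = (\<lambda>_. 0::nat)(i := r)"
    have j0M: "j0 \<in> M" using i rlt n2 by (auto simp: j0_def multi_idx_def intro: less_le_trans[of 0 2])
    have "Dop d n y T j0 = (\<Sum>m\<in>{1..d}. \<Sum>c<n m. y m (j0 m) c * T (j0(m:=c)))"
      by (rule Dop_in[OF j0M])
    also have "\<dots> = (\<Sum>m\<in>{1..d}. if m = i then y i r 0 else 0)"
    proof (intro sum.cong refl)
      fix m assume m: "m \<in> {1..d}"
      show "(\<Sum>c<n m. y m (j0 m) c * T (j0(m:=c))) = (if m = i then y i r 0 else 0)"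
      proof (cases "m = i")
        case True
        have "(\<Sum>c<n m. y m (j0 m) c * T (j0(m:=c))) = (\<Sum>c<n i. if c = 0 then y i r 0 else 0)"
          unfolding True by (intro sum.cong refl) (simp add: j0_def T_zero_slice[OF i])
        also have "\<dots> = y i r 0" using n0 by simp
        finally show ?thesis using True by simp
      next
        case False
        have "T (j0(m:=c)) = 0" for c
          by (rule T_big[OF i]) (use False in \<open>simp add: j0_def r_def\<close>)
        then show ?thesis using False by simp
      qed
    qed
    also have "\<dots> = y i r 0" using i by simp
    finally show ?thesis using y by (simp add: Kset_def)
  qed
  have pr: "p i r 0 = 1"
    using fun_cong[OF fun_cong[OF fun_cong[OF Xpy, of i], of r], of 0] yr by (simp add: X_def gadd_def)
  define U where "U = (\<lambda>a b. mident (n i) a b + 1 * Em r a b)"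
  define U' where "U' = (\<lambda>a b. mident (n i) a b + (- 1) * Em r a b)"
  define u where "u = ins d n i U"
  have UU': "mmul (n i) U U' = mident (n i)" unfolding U_def U'_def by (rule IE_inv[OF rpos rlt])
  have U'U: "mmul (n i) U' U = mident (n i)" using IE_inv[OF rpos rlt, of "-1"] by (simp add: U_def U'_def)
  have Us: "msupp (n i) U" "msupp (n i) U'" unfolding U_def U'_def using IE_supp[OF rlt] by blast+
  have minvU: "minv (n i) U = U'" by (rule minv_unique[OF Us(2) UU' U'U])
  have minvI: "minv (n m) (mident (n m)) = mident (n m)" for m
    by (rule minv_unique) (simp_all add: mident_supp mmul_ident_left)
  have u_stab: "u \<in> stab d n T"
  proof -
    have ug: "u \<in> gl_alg d n" using Us(1) by (auto simp: u_def ins_def gl_alg_def msupp_def mident_def)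
    have "\<exists>B. (\<forall>a b. (a \<ge> n m \<or> b \<ge> n m) \<longrightarrow> B a b = 0)
      \<and> mmul (n m) (u m) B = mident (n m) \<and> mmul (n m) B (u m) = mident (n m)" if m: "m \<in> {1..d}" for m
    proof (cases "m = i")
      case True then show ?thesis
        using m Us UU' U'U by (intro exI[of _ U']) (auto simp: u_def ins_def msupp_def)
    next
      case False then show ?thesis
        using m mident_supp[of "n m"] mmul_ident_left[OF mident_supp[of "n m"]]
        by (intro exI[of _ "mident (n m)"]) (simp add: u_def ins_def msupp_def)
    qed
    then have uG: "u \<in> GL_grp d n" using ug by (simp add: GL_grp_def)
    have "act d n u T = T"
    proof
      fix j show "act d n u T j = T j"
      proof (cases "j \<in> M")
        case True
        have "act d n u T j = (\<Sum>c<n i. U (j i) c * T (j(i:=c)))" unfolding u_def by (rule act_ins[OF True i])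
        also have "\<dots> = (\<Sum>c<n i. if c = j i then T j else 0)"
        proof (intro sum.cong refl)
          fix c assume c: "c \<in> {..<n i}"
          have "T (j(i:=r)) = 0" by (rule T_big[OF i]) (simp add: r_def)
          then show "U (j i) c * T (j(i:=c)) = (if c = j i then T j else 0)"
            using rpos multi_lt[OF True i] by (auto simp: U_def mident_def Em_def)
        qed
        also have "\<dots> = T j" using True i by (simp add: multi_lt)
        finally show ?thesis .
      qed (simp add: act_out T_out)
    qed
    then show ?thesis using uG by (simp add: stab_def)
  qed
  have conj: "gconj d n u q m a b = (if m = i \<and> a < n i \<and> b < n i then
        q i a b + (if a = 0 then q i r b else 0) - (if b = r then q i a 0 + (if a = 0 then q i r 0 else 0) else 0)
        else q m a b)" if q: "q \<in> gl_alg d n" for q m a b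
  proof (cases "m \<in> {1..d}")
    case False then show ?thesis using q i by (auto simp: gconj_def gl_alg_def)
  next
    case m: True
    show ?thesis
    proof (cases "m = i")
      case False
      have "msupp (n m) (q m)" using q m by (simp add: gl_alg_supp)
      then show ?thesis using m False
        by (simp add: gconj_def u_def ins_def minvI mmul_ident_left mmul_ident_right)
    next
      case True
      show ?thesis
      proof (cases "a < n i \<and> b < n i")
        case ab: True
        have "gconj d n u q m a b = mmul (n i) (mmul (n i) U (q i)) U' a b"
          using True m by (simp add: gconj_def u_def ins_def minvU)
        also have "\<dots> = mmul (n i) U (q i) a b + - 1 * (if b = r then mmul (n i) U (q i) a 0 else 0)"
          unfolding U'_def by (rule mm_IE_right) (use ab n0 in auto)
        also have "\<dots> = q i a b + (if a = 0 then q i r b else 0) - (if b = r then q i a 0 + (if a = 0 then q i r 0 else 0) else 0)"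
        proof -
          have L: "mmul (n i) U (q i) a' b' = q i a' b' + (if a' = 0 then q i r b' else 0)"
            if "a' < n i" "b' < n i" for a' b'
            using mm_IE_left[OF that rlt, of 1 "q i"] by (simp add: U_def)
          show ?thesis using ab n0 by (simp add: L)
        qed
        finally show ?thesis using True ab by simp
      next
        case False
        then show ?thesis using True q i by (auto simp: gconj_def mmul_out gl_alg_def)
      qed
    qed
  qed
  define p1 where "p1 = gconj d n u p"
  define p2 where "p2 = gconj d n u p1"
  have p1P: "p1 \<in> P" using inv u_stab p unfolding p1_def by blast
  have p2P: "p2 \<in> P" using inv u_stab p1P unfolding p2_def by blast
  have p1g: "p1 \<in> gl_alg d n" using P p1P by (rule lin_sub_gl)
  define Q where "Q = (\<lambda>m a b. p2 m a b + (-2) * p1 m a b + p m a b)"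
  have QP: "Q \<in> P"
  proof -
    have "(\<lambda>m a b. (-2) * p1 m a b) \<in> P" by (rule lin_sub_scale[OF P p1P])
    then have "(\<lambda>m a b. p2 m a b + (-2) * p1 m a b) \<in> P" by (rule lin_sub_add[OF P p2P])
    then show ?thesis unfolding Q_def by (rule lin_sub_add[OF P _ p])
  qed
  have c1: "p1 m a b = (if m = i \<and> a < n i \<and> b < n i then
        p i a b + (if a = 0 then p i r b else 0) - (if b = r then p i a 0 + (if a = 0 then p i r 0 else 0) else 0)
        else p m a b)" for m a b
    unfolding p1_def by (rule conj[OF pg])
  have c2: "p2 m a b = (if m = i \<and> a < n i \<and> b < n i then
        p1 i a b + (if a = 0 then p1 i r b else 0) - (if b = r then p1 i a 0 + (if a = 0 then p1 i r 0 else 0) else 0)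
        else p1 m a b)" for m a b
    unfolding p2_def by (rule conj[OF p1g])
  have Qval: "Q m a b = (if m = i \<and> a = 0 \<and> b = r then -2 * p i r 0 else 0)" for m a b
  proof (cases "m = i \<and> a < n i \<and> b < n i")
    case True
    have "r \<noteq> 0" using rpos by simp
    then show ?thesis using True n0 rlt
      unfolding Q_def c2 c1 by auto
  next
    case False
    then show ?thesis using pg unfolding Q_def c2 c1
      using rlt by (auto simp: gl_alg_def)
  qed
  have QK: "Q \<in> Kset d n T"
  proof -
    have Qg: "Q \<in> gl_alg d n" using lin_sub_gl[OF P QP] .
    have "Dop d n Q T j = 0" for j
    proof (cases "j \<in> M")
      case True
      have "T (j(i:=r)) = 0" by (rule T_big[OF i]) (simp add: r_def)
      then have "Q m (j m) c * T (j(m:=c)) = 0" for m c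
        by (auto simp: Qval)
      then have z: "Q m (j m) c * T (j(m:=c)) = 0" for m c by blast
      show ?thesis unfolding Dop_in[OF True] z by simp
    qed (simp add: Dop_out)
    then show ?thesis using Qg by (simp add: Kset_def)
  qed
  have "Q \<in> {\<lambda>i a b. 0}" using PK QP QK by blast
  then have "Q i 0 r = 0" by simp
  then show False using Qval[of i 0 r] pr by simp
qed

end

theorem mainTheorem14:
  fixes d :: nat and n s :: "nat \<Rightarrow> nat"
  assumes "d \<ge> 3"
    and "\<forall>i\<in>{1..d}. n i \<ge> 2"
    and "\<forall>i\<in>{1..d-1}. s i > 0"
    and "s 0 = 1" and "s d = 1"
    and "\<forall>i\<in>{1..d}. s (i - 1) * s i \<le> n i"
  shows "(reductive d n (stab d n (T_mps d s)) \<longleftrightarrow> (\<forall>i\<in>{1..d}. n i = s (i - 1) * s i))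
       \<and> ((\<forall>i\<in>{1..d}. n i = s (i - 1) * s i) \<longrightarrow>
           (\<forall>h\<in>stab d n (T_mps d s).
              gconj d n h ` orth_compl d n (lie_alg d n (stab d n (T_mps d s)))
                \<subseteq> orth_compl d n (lie_alg d n (stab d n (T_mps d s)))))"
proof -
  interpret mpsset d n s using assms by (simp add: mpsset_def)
  have 1: "reductive d n (stab d n (T_mps d s)) \<longleftrightarrow> (\<forall>i\<in>{1..d}. n i = s (i - 1) * s i)"
    using only_if reductive_if by blast
  have 2: "(\<forall>i\<in>{1..d}. n i = s (i - 1) * s i) \<longrightarrow>
           (\<forall>h\<in>stab d n (T_mps d s).
              gconj d n h ` orth_compl d n (lie_alg d n (stab d n (T_mps d s)))
                \<subseteq> orth_compl d n (lie_alg d n (stab d n (T_mps d s))))"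
    unfolding lie_K using invariance by blast
  show ?thesis using 1 2 by blast
qed

end
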